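(* Let $n\ge m\ge 2$ be integers. Consider any optimal solution of the shifting-checkers game with $n$ black and $m$ white checkers whose first move is the slide of the white checker at position $n+2$ to the left into position $n+1$. For $1\le t\le m$ define $$\nu_t=\begin{cases} w^{t}(wb)^{m-t}Ob^{n-m+t} & n+t \text{ even},\\ w^{t}O(wb)^{m-t}b^{n-m+t} & n+t\text{ odd}\end{cases}$$ (so $\nu_m=w^mOb^n$). Then this optimal solution passes through all of the configurations $\nu_1,\dots,\nu_m$, and for each $1\le i\le m-1$ the portion of the move sequence leading from $\nu_i$ to $\nu_{i+1}$ is the same for all such optimal solutions (the shortest path from $\nu_i$ to $\nu_{i+1}$ is unique).
   Context: The game: positions $1,\dots,n+m+1$ in a row, each holding a black checker ($b$), a white checker ($w$) or nothing, with exactly one empty position (the vacancy $O$); configurations are written as words over $\{b,w,O\}$, exponents denoting repetition. Initial configuration $b^nOw^m$, final configuration $w^mOb^n$. A legal move is a slide (a checker adjacent to the vacancy moves into it) or a jump (a checker at distance two from the vacancy jumps over the checker between them into it), in either direction. An optimal solution is a sequence of legal moves from the initial to the final configuration of minimum length (this minimum is $nm+n+m$). *)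

theory Defs
  imports Main
begin

text \<open>Cells of the board: black checker, white checker, or the vacancy Vac.
  A configuration is the list of cells at positions 1..n+m+1 (list index i = position i+1).\<close>
datatype cell = Blk | Wht | Vac

type_synonym config = "cell list"

definition legal_move :: "config \<Rightarrow> config \<Rightarrow> bool" where
  "legal_move c c' \<longleftrightarrow>
     (\<exists>i j. i < length c \<and> j < length c \<and> c ! i = Vac \<and> c ! j \<noteq> Vac \<and>
        (j = i + 1 \<or> i = j + 1 \<or>
         (j = i + 2 \<and> c ! (i + 1) \<noteq> Vac) \<or> (i = j + 2 \<and> c ! (j + 1) \<noteq> Vac)) \<and>
        c' = c[i := c ! j, j := Vac])"

definition init_config :: "nat \<Rightarrow> nat \<Rightarrow> config" where
  "init_config n m = replicate n Blk @ [Vac] @ replicate m Wht"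

definition final_config :: "nat \<Rightarrow> nat \<Rightarrow> config" where
  "final_config n m = replicate m Wht @ [Vac] @ replicate n Blk"

text \<open>A solution is a sequence of configurations, starting at the initial and ending at the
  final configuration, consecutive ones related by a legal move.  Its number of moves is
  length - 1.\<close>
definition is_path :: "config list \<Rightarrow> bool" where
  "is_path p \<longleftrightarrow> p \<noteq> [] \<and> (\<forall>k. Suc k < length p \<longrightarrow> legal_move (p ! k) (p ! Suc k))"

definition solution :: "nat \<Rightarrow> nat \<Rightarrow> config list \<Rightarrow> bool" where
  "solution n m p \<longleftrightarrow> is_path p \<and> hd p = init_config n m \<and> last p = final_config n m"

definition optimal_solution :: "nat \<Rightarrow> nat \<Rightarrow> config list \<Rightarrow> bool" where
  "optimal_solution n m p \<longleftrightarrow> solution n m p \<and> (\<forall>q. solution n m q \<longrightarrow> length p \<le> length q)"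

definition wb_pow :: "nat \<Rightarrow> config" where
  "wb_pow k = concat (replicate k [Wht, Blk])"

definition nu :: "nat \<Rightarrow> nat \<Rightarrow> nat \<Rightarrow> config" where
  "nu n m t = (if even (n + t)
     then replicate t Wht @ wb_pow (m - t) @ [Vac] @ replicate (n - m + t) Blk
     else replicate t Wht @ [Vac] @ wb_pow (m - t) @ replicate (n - m + t) Blk)"

text \<open>Configuration after the first move: the white checker at position n+2 slides left
  into position n+1, giving b^n w Vac w^(m-1).\<close>
definition first_move_config :: "nat \<Rightarrow> nat \<Rightarrow> config" where
  "first_move_config n m = replicate n Blk @ [Wht, Vac] @ replicate (m - 1) Wht"

end

theory Submission
  imports Defs
begin


definition cfg :: "cell list \<Rightarrow> nat \<Rightarrow> config" where
  "cfg ws g = take g ws @ Vac # drop g ws"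

definition swp :: "cell list \<Rightarrow> nat \<Rightarrow> cell list" where
  "swp ws p = ws[p := ws ! Suc p, Suc p := ws ! p]"

lemma cfg_length[simp]: "g \<le> length ws \<Longrightarrow> length (cfg ws g) = Suc (length ws)"
  by (simp add: cfg_def)

lemma cfg_nth: "g \<le> length ws \<Longrightarrow> k < Suc (length ws) \<Longrightarrow>
   cfg ws g ! k = (if k < g then ws ! k else if k = g then Vac else ws ! (k - 1))"
  by (auto simp: cfg_def nth_append min_def nth_Cons' split: nat.splits)

lemma cfg_vac_unique: "Vac \<notin> set ws \<Longrightarrow> g \<le> length ws \<Longrightarrow> i < Suc (length ws) \<Longrightarrow>
   cfg ws g ! i = Vac \<Longrightarrow> i = g"
proof -
  assume a: "Vac \<notin> set ws" "g \<le> length ws" "i < Suc (length ws)" "cfg ws g ! i = Vac"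
  show "i = g"
  proof (rule ccontr)
    assume "i \<noteq> g"
    then have "cfg ws g ! i \<in> set ws" using a(2,3) by (auto simp: cfg_nth intro!: nth_mem)
    then show False using a by simp
  qed
qed

lemma cfg_eqI: "length c = Suc (length ws) \<Longrightarrow> g \<le> length ws \<Longrightarrow>
   (\<And>k. k < Suc (length ws) \<Longrightarrow> c ! k = (if k < g then ws ! k else if k = g then Vac else ws ! (k - 1)))
   \<Longrightarrow> c = cfg ws g"
  by (rule nth_equalityI) (auto simp: cfg_nth)

lemma legal_cfg:
  assumes v: "Vac \<notin> set ws" and g: "g \<le> length ws" and lm: "legal_move (cfg ws g) y"
  shows "(g < length ws \<and> y = cfg ws (Suc g)) \<or> (0 < g \<and> y = cfg ws (g - 1)) \<or>
         (Suc g < length ws \<and> y = cfg (swp ws g) (g + 2)) \<or>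
         (2 \<le> g \<and> y = cfg (swp ws (g - 2)) (g - 2))"
proof -
  obtain i j where ij: "i < length (cfg ws g)" "j < length (cfg ws g)" "cfg ws g ! i = Vac"
    "cfg ws g ! j \<noteq> Vac"
    "j = i + 1 \<or> i = j + 1 \<or> (j = i + 2 \<and> cfg ws g ! (i + 1) \<noteq> Vac) \<or> (i = j + 2 \<and> cfg ws g ! (j + 1) \<noteq> Vac)"
    and y: "y = (cfg ws g)[i := cfg ws g ! j, j := Vac]"
    using lm unfolding legal_move_def by blast
  have ig: "i = g" using cfg_vac_unique[OF v g] ij(1,3) g by simp
  have L: "length (cfg ws g) = Suc (length ws)" using g by simp
  have ly: "length y = Suc (length ws)" using y L by simp
  from ij(5) show ?thesis
  proof (elim disjE conjE)
    assume j: "j = i + 1"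
    have "g < length ws" using ij(2) j ig L by simp
    moreover have "y = cfg ws (Suc g)"
      by (rule cfg_eqI) (use ly \<open>g < length ws\<close> in \<open>auto simp: y j ig cfg_nth L nth_list_update\<close>)
    ultimately show ?thesis by blast
  next
    assume j: "i = j + 1"
    have "0 < g" using j ig by simp
    moreover have "y = cfg ws (g - 1)"
      by (rule cfg_eqI) (use ly g j ig in \<open>auto simp: y cfg_nth L nth_list_update\<close>)
    ultimately show ?thesis by blast
  next
    assume j: "j = i + 2"
    have "Suc g < length ws" using ij(2) j ig L by simp
    moreover have "y = cfg (swp ws g) (g + 2)"
      by (rule cfg_eqI) (use ly \<open>Suc g < length ws\<close> j ig in \<open>auto simp: y cfg_nth L nth_list_update swp_def\<close>)
    ultimately show ?thesis by blast
  next
    assume j: "i = j + 2"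
    have "2 \<le> g" using j ig by simp
    moreover have "y = cfg (swp ws (g - 2)) (g - 2)"
      by (rule cfg_eqI) (use ly g j ig in \<open>auto simp: y cfg_nth L nth_list_update swp_def\<close>)
    ultimately show ?thesis by blast
  qed
qed


definition cW :: "nat \<Rightarrow> cell list \<Rightarrow> nat" where
  "cW k ws = length (filter (\<lambda>x. x = Wht) (take k ws))"
definition cB :: "nat \<Rightarrow> cell list \<Rightarrow> nat" where
  "cB k ws = length (filter (\<lambda>x. x = Blk) (take k ws))"

lemma cW_0[simp]: "cW 0 ws = 0" by (simp add: cW_def)
lemma cB_0[simp]: "cB 0 ws = 0" by (simp add: cB_def)

lemma cW_Suc: "cW (Suc k) ws = cW k ws + (if k < length ws \<and> ws ! k = Wht then 1 else 0)"
  by (cases "k < length ws") (auto simp: cW_def take_Suc_conv_app_nth)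
lemma cB_Suc: "cB (Suc k) ws = cB k ws + (if k < length ws \<and> ws ! k = Blk then 1 else 0)"
  by (cases "k < length ws") (auto simp: cB_def take_Suc_conv_app_nth)

lemma cW_mono: "k \<le> k' \<Longrightarrow> cW k ws \<le> cW k' ws"
  by (induction k' rule: dec_induct) (auto simp: cW_Suc)
lemma cB_mono: "k \<le> k' \<Longrightarrow> cB k ws \<le> cB k' ws"
  by (induction k' rule: dec_induct) (auto simp: cB_Suc)

lemma cW_le: "cW k ws \<le> k"
  by (induction k) (auto simp: cW_Suc)

lemma cW_cB: "set ws \<subseteq> {Blk, Wht} \<Longrightarrow> k \<le> length ws \<Longrightarrow> cW k ws + cB k ws = k"
proof (induction k)
  case (Suc k)
  have "ws ! k \<in> set ws" using Suc.prems by (intro nth_mem) simp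
  then have "ws ! k \<in> {Blk, Wht}" using Suc.prems by blast
  then show ?case using Suc by (cases "ws ! k") (auto simp: cW_Suc cB_Suc)
qed simp

lemma cW_beyond: "length ws \<le> k \<Longrightarrow> cW k ws = cW (length ws) ws"
  by (simp add: cW_def)

lemma swp_length[simp]: "length (swp ws p) = length ws" by (simp add: swp_def)

lemma swp_nth: "Suc p < length ws \<Longrightarrow>
  swp ws p ! i = (if i = p then ws ! Suc p else if i = Suc p then ws ! p else ws ! i)"
  by (auto simp: swp_def nth_list_update)

lemma swp_same: "Suc p < length ws \<Longrightarrow> ws ! p = ws ! Suc p \<Longrightarrow> swp ws p = ws"
  by (rule nth_equalityI) (auto simp: swp_nth)

lemma swp_set: "Suc p < length ws \<Longrightarrow> set (swp ws p) \<subseteq> set ws"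
proof
  fix x assume "Suc p < length ws" "x \<in> set (swp ws p)"
  then obtain i where "i < length ws" "swp ws p ! i = x" by (auto simp: in_set_conv_nth)
  then show "x \<in> set ws" using \<open>Suc p < length ws\<close> by (auto simp: swp_nth split: if_splits)
qed

lemma cW_swp_le: "Suc p < length ws \<Longrightarrow> k \<le> p \<Longrightarrow> cW k (swp ws p) = cW k ws"
  by (induction k) (auto simp: cW_Suc swp_nth)

lemma cW_swp_Suc: "Suc p < length ws \<Longrightarrow>
  cW (Suc p) (swp ws p) = cW p ws + (if ws ! Suc p = Wht then 1 else 0)"
  by (simp add: cW_Suc cW_swp_le swp_nth)

lemma cW_swp_ge: assumes "Suc p < length ws" "p + 2 \<le> k" shows "cW k (swp ws p) = cW k ws"
  using assms(2)
proof (induction k rule: dec_induct)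
  case base
  then show ?case using assms(1)
    by (simp add: numeral_2_eq_2 cW_Suc cW_swp_le swp_nth)
next
  case (step k)
  then show ?case using assms(1) by (auto simp: cW_Suc swp_nth)
qed

lemma cW_swp: "Suc p < length ws \<Longrightarrow> k \<noteq> Suc p \<Longrightarrow> cW k (swp ws p) = cW k ws"
  by (cases "k \<le> p") (auto simp: cW_swp_le cW_swp_ge)


definition Sq :: "nat \<Rightarrow> nat \<Rightarrow> (nat \<times> nat) set" where
  "Sq n m = {0..<m} \<times> {0..<n}"
definition Fl :: "nat \<Rightarrow> nat \<Rightarrow> cell list \<Rightarrow> (nat \<times> nat) set" where
  "Fl n m ws = {q \<in> Sq n m. fst q < cW (fst q + snd q + 1) ws}"
definition Uf :: "nat \<Rightarrow> nat \<Rightarrow> cell list \<Rightarrow> (nat \<times> nat) set" where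
  "Uf n m ws = Sq n m - Fl n m ws"
definition lnq :: "nat \<times> nat \<Rightarrow> int" where
  "lnq q = int (fst q) - int (snd q)"
definition wv :: "nat \<Rightarrow> nat \<Rightarrow> cell list \<Rightarrow> bool" where
  "wv n m ws \<longleftrightarrow> length ws = n + m \<and> set ws \<subseteq> {Blk, Wht} \<and> cW (n + m) ws = m"
definition hgt :: "cell list \<Rightarrow> nat \<Rightarrow> int" where
  "hgt ws g = 2 * int (cW g ws) - int g"

lemma Sq_iff: "q \<in> Sq n m \<longleftrightarrow> fst q < m \<and> snd q < n"
  by (cases q) (auto simp: Sq_def)

lemma Fl_sub: "Fl n m ws \<subseteq> Sq n m" by (auto simp: Fl_def)
lemma Un_sub: "Uf n m ws \<subseteq> Sq n m" by (auto simp: Uf_def)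
lemma finite_Sq[simp]: "finite (Sq n m)" by (simp add: Sq_def)

lemma wv_cB: assumes "wv n m ws" shows "cB (n + m) ws = n"
  using cW_cB[of ws "n+m"] assms by (simp add: wv_def)

lemma swp_swp: "Suc p < length ws \<Longrightarrow> swp (swp ws p) p = ws"
  by (rule nth_equalityI) (auto simp: swp_nth)

lemma wv_swp: "wv n m ws \<Longrightarrow> Suc p < length ws \<Longrightarrow> wv n m (swp ws p)"
  unfolding wv_def using swp_set[of p ws] cW_swp[of p ws "n+m"] by auto

lemma cW_Suc_le: "cW (Suc k) ws \<le> Suc (cW k ws)"
  by (simp add: cW_Suc)

lemma Fl_down1: "(i, j) \<in> Fl n m ws \<Longrightarrow> 0 < i \<Longrightarrow> (i - 1, j) \<in> Fl n m ws"
proof -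
  assume a: "(i, j) \<in> Fl n m ws" "0 < i"
  have "cW (Suc (i + j)) ws \<le> Suc (cW (i + j) ws)" by (rule cW_Suc_le)
  then show ?thesis using a by (auto simp: Fl_def Sq_iff)
qed

lemma Fl_down2: "(i, j) \<in> Fl n m ws \<Longrightarrow> Suc j < n \<Longrightarrow> (i, Suc j) \<in> Fl n m ws"
proof -
  assume a: "(i, j) \<in> Fl n m ws" "Suc j < n"
  have "cW (i + j + 1) ws \<le> cW (i + Suc j + 1) ws" by (rule cW_mono) simp
  then show ?thesis using a by (auto simp: Fl_def Sq_iff)
qed

lemma flip_BW:
  assumes w: "wv n m ws" and p: "Suc p < length ws" and b: "ws ! p = Blk" and ww: "ws ! Suc p = Wht"
  defines "q \<equiv> (cW p ws, p - cW p ws)"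
  shows "q \<in> Sq n m" "q \<notin> Fl n m ws" "Fl n m (swp ws p) = insert q (Fl n m ws)"
proof -
  have set: "set ws \<subseteq> {Blk, Wht}" and len: "length ws = n + m" using w by (auto simp: wv_def)
  have c1: "cW (Suc p) ws = cW p ws" using b by (simp add: cW_Suc)
  have c2: "cW (Suc (Suc p)) ws = Suc (cW p ws)" using b ww p by (simp add: cW_Suc)
  have "cW (Suc (Suc p)) ws \<le> cW (n + m) ws" using p len by (intro cW_mono) simp
  then have am: "cW p ws < m" using c2 w by (simp add: wv_def)
  have cbp: "cW p ws + cB p ws = p" using cW_cB[OF set] p by simp
  have cb1: "cB (Suc p) ws = Suc (cB p ws)" using b p by (simp add: cB_Suc)
  have "cB (Suc p) ws \<le> cB (n + m) ws" using p len by (intro cB_mono) simp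
  then have bn: "p - cW p ws < n" using cb1 cbp wv_cB[OF w] by simp
  show q: "q \<in> Sq n m" using am bn by (simp add: q_def Sq_iff)
  have le: "cW p ws \<le> p" by (rule cW_le)
  show "q \<notin> Fl n m ws" using c1 le by (simp add: q_def Fl_def)
  show "Fl n m (swp ws p) = insert q (Fl n m ws)"
  proof (rule set_eqI)
    fix x :: "nat \<times> nat"
    obtain i j where x: "x = (i, j)" by fastforce
    show "x \<in> Fl n m (swp ws p) \<longleftrightarrow> x \<in> insert q (Fl n m ws)"
    proof (cases "i + j = p")
      case True
      have "cW (Suc p) (swp ws p) = Suc (cW p ws)" using cW_swp_Suc[OF p] ww by simp
      then show ?thesis using True c1 q le by (auto simp: x Fl_def q_def Sq_iff)
    next
      case False
      then have "cW (i + j + 1) (swp ws p) = cW (i + j + 1) ws" using cW_swp[OF p] by simp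
      then show ?thesis using False le by (auto simp: x Fl_def q_def)
    qed
  qed
qed

lemma flip_WB:
  assumes w: "wv n m ws" and p: "Suc p < length ws" and b: "ws ! p = Wht" and ww: "ws ! Suc p = Blk"
  defines "q \<equiv> (cW p ws, p - cW p ws)"
  shows "q \<in> Fl n m ws" "Fl n m (swp ws p) = Fl n m ws - {q}"
proof -
  let ?v = "swp ws p"
  have w': "wv n m ?v" using wv_swp[OF w p] .
  have p': "Suc p < length ?v" using p by simp
  have b': "?v ! p = Blk" "?v ! Suc p = Wht" using b ww p by (auto simp: swp_nth)
  have e: "swp ?v p = ws" using swp_swp[OF p] .
  have cq: "cW p ?v = cW p ws" using cW_swp_le[OF p] by simp
  note f = flip_BW[OF w' p' b'(1) b'(2)]
  show "q \<in> Fl n m ws" using f(3) e cq by (simp add: q_def)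
  show "Fl n m (swp ws p) = Fl n m ws - {q}" using f(2,3) e cq by (auto simp: q_def)
qed


definition adjR :: "(nat \<times> nat) set \<Rightarrow> (nat \<times> nat) set \<Rightarrow> int \<Rightarrow> nat \<Rightarrow> bool" where
  "adjR S R c i0 \<longleftrightarrow> (\<forall>q\<in>R. lnq q = c \<longrightarrow> i0 \<le> fst q \<and>
      (\<forall>q'\<in>S. lnq q' = c \<longrightarrow> i0 \<le> fst q' \<longrightarrow> fst q' \<le> fst q \<longrightarrow> q' \<in> R))"
definition adjL :: "(nat \<times> nat) set \<Rightarrow> (nat \<times> nat) set \<Rightarrow> int \<Rightarrow> nat \<Rightarrow> bool" where
  "adjL S R c i0 \<longleftrightarrow> (\<forall>q\<in>R. lnq q = c \<longrightarrow> fst q < i0 \<and>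
      (\<forall>q'\<in>S. lnq q' = c \<longrightarrow> fst q \<le> fst q' \<longrightarrow> fst q' < i0 \<longrightarrow> q' \<in> R))"
definition bad :: "(nat \<times> nat) set \<Rightarrow> (nat \<times> nat) set \<Rightarrow> int \<Rightarrow> int \<Rightarrow> nat \<Rightarrow>
    ((nat \<times> nat) \<Rightarrow> (nat \<times> nat) set) \<Rightarrow> bool" where
  "bad S R e c i0 D \<longleftrightarrow> (c = e \<and> R \<noteq> {}) \<or>
     ((\<exists>q\<in>R. lnq q = c) \<and> \<not> adjR S R c i0 \<and> \<not> adjL S R c i0) \<or>
     (\<exists>q\<in>R. lnq q = c \<and> (\<exists>q'\<in>D q. q' \<in> R))"
definition Lam :: "(nat \<times> nat) set \<Rightarrow> int \<Rightarrow> int \<Rightarrow> int set" where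
  "Lam R e c = {e, c} \<union> lnq ` R"
definition pot :: "(nat \<times> nat) set \<Rightarrow> (nat \<times> nat) set \<Rightarrow> int \<Rightarrow> int \<Rightarrow> nat \<Rightarrow>
    ((nat \<times> nat) \<Rightarrow> (nat \<times> nat) set) \<Rightarrow> int" where
  "pot S R e c i0 D = int (card R) + int (card (Lam R e c)) - 1 + (if bad S R e c i0 D then 1 else 0)"

lemma lnq_fst_eq: "lnq q = lnq q' \<Longrightarrow> fst q = fst q' \<Longrightarrow> q = q'"
  by (cases q, cases q') (auto simp: lnq_def)

lemma finite_Lam[simp]: "finite R \<Longrightarrow> finite (Lam R e c)" by (simp add: Lam_def)

lemma bad_line: "bad S R e c i0 D \<Longrightarrow> c \<in> insert e (lnq ` R)"
  by (auto simp: bad_def)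

lemma G1: assumes "finite R" shows "pot S R e c i0 D \<le> pot S R e c' i0' D + 1"
proof -
  have f: "finite (Lam R e c')" using assms by simp
  have "card (Lam R e c) \<le> card (insert c (Lam R e c'))"
    using f by (intro card_mono) (auto simp: Lam_def)
  also have "\<dots> \<le> Suc (card (Lam R e c'))" by (simp add: card_insert_if f)
  finally have A: "card (Lam R e c) \<le> Suc (card (Lam R e c'))" .
  have B: "bad S R e c i0 D \<Longrightarrow> card (Lam R e c) \<le> card (Lam R e c')"
    using f bad_line[of S R e c i0 D] by (intro card_mono) (auto simp: Lam_def)
  show ?thesis using A B by (auto simp: pot_def)
qed

lemma G3: assumes "finite R" "q \<notin> R"
  shows "pot S R e c i0 D \<le> pot S (insert q R) e c i0' D"
proof -
  have "card (Lam R e c) \<le> card (Lam (insert q R) e c)"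
    using assms by (intro card_mono) (auto simp: Lam_def)
  moreover have "card (insert q R) = Suc (card R)" using assms by simp
  ultimately show ?thesis by (auto simp: pot_def)
qed



lemma adjR_single: "(\<forall>q1\<in>R. lnq q1 = c \<longrightarrow> q1 = q) \<Longrightarrow> lnq q = c \<Longrightarrow> fst q = i0 \<Longrightarrow> q \<in> R \<Longrightarrow> adjR S R c i0"
  unfolding adjR_def
proof (intro ballI impI conjI)
  fix q2 assume h: "\<forall>q1\<in>R. lnq q1 = c \<longrightarrow> q1 = q" "lnq q = c" "fst q = i0" "q \<in> R" "q2 \<in> R" "lnq q2 = c"
  then have "q2 = q" by blast
  then show "i0 \<le> fst q2" using h(3) by simp
  fix q' assume "q' \<in> S" "lnq q' = c" "i0 \<le> fst q'" "fst q' \<le> fst q2"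
  then have "fst q' = fst q" using h(3) \<open>q2 = q\<close> by simp
  then have "q' = q" using lnq_fst_eq[of q' q] \<open>lnq q' = c\<close> h(2) by simp
  then show "q' \<in> R" using h(4) by simp
qed

lemma adjL_single: "(\<forall>q1\<in>R. lnq q1 = c \<longrightarrow> q1 = q) \<Longrightarrow> lnq q = c \<Longrightarrow> Suc (fst q) = i0 \<Longrightarrow> q \<in> R \<Longrightarrow> adjL S R c i0"
  unfolding adjL_def
proof (intro ballI impI conjI)
  fix q2 assume h: "\<forall>q1\<in>R. lnq q1 = c \<longrightarrow> q1 = q" "lnq q = c" "Suc (fst q) = i0" "q \<in> R" "q2 \<in> R" "lnq q2 = c"
  then have "q2 = q" by blast
  then show "fst q2 < i0" using h(3) by simp
  fix q' assume "q' \<in> S" "lnq q' = c" "fst q2 \<le> fst q'" "fst q' < i0"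
  then have "fst q' = fst q" using h(3) \<open>q2 = q\<close> by simp
  then have "q' = q" using lnq_fst_eq[of q' q] \<open>lnq q' = c\<close> h(2) by simp
  then show "q' \<in> R" using h(4) by simp
qed

lemma G2_adj:
  assumes RS: "R \<subseteq> S" and q: "q \<in> R" "lnq q = c"
    and mv: "(fst q = i0 \<and> i0' = Suc i0) \<or> (Suc (fst q) = i0 \<and> Suc i0' = i0)"
    and a: "adjR S (R - {q}) c i0' \<or> adjL S (R - {q}) c i0'"
  shows "adjR S R c i0 \<or> adjL S R c i0"
  using mv
proof
  assume r: "fst q = i0 \<and> i0' = Suc i0"
  show ?thesis
  proof (cases "\<exists>q1\<in>R - {q}. lnq q1 = c")
    case False
    then have "\<forall>q1\<in>R. lnq q1 = c \<longrightarrow> q1 = q" by blast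
    then have "adjR S R c i0" using q r adjR_single by blast
    then show ?thesis ..
  next
    case True
    then obtain q1 where q1: "q1 \<in> R" "q1 \<noteq> q" "lnq q1 = c" by blast
    have ne: "fst q1 \<noteq> i0" using q1 q r lnq_fst_eq[of q1 q] by auto
    have "\<not> adjL S (R - {q}) c i0'"
    proof
      assume L: "adjL S (R - {q}) c i0'"
      have q1': "q1 \<in> R - {q}" using q1 by blast
      then have "fst q1 < i0'" using L q1(3) unfolding adjL_def by blast
      then have le: "fst q1 \<le> fst q" using r ne by simp
      have "fst q < i0'" using r by simp
      then have "q \<in> R - {q}" using L q1' q1(3) le q(2) RS q(1) unfolding adjL_def by blast
      then show False by simp
    qed
    then have R: "adjR S (R - {q}) c i0'" using a by blast
    have "adjR S R c i0"
      unfolding adjR_def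
    proof (intro ballI impI conjI)
      fix q2 assume q2: "q2 \<in> R" "lnq q2 = c"
      show "i0 \<le> fst q2"
      proof (cases "q2 = q")
        case False
        then have "q2 \<in> R - {q}" using q2 by blast
        then have "i0' \<le> fst q2" using R q2(2) unfolding adjR_def by blast
        then show ?thesis using r by simp
      qed (use r in simp)
      fix q' assume q': "q' \<in> S" "lnq q' = c" "i0 \<le> fst q'" "fst q' \<le> fst q2"
      show "q' \<in> R"
      proof (cases "fst q' = i0")
        case True then show ?thesis using lnq_fst_eq[of q' q] q' q r by auto
      next
        case False
        then have "q2 \<noteq> q" using q' r by auto
        then have "q2 \<in> R - {q}" using q2 by blast
        moreover have "i0' \<le> fst q'" using False q' r by simp
        ultimately have "q' \<in> R - {q}" using R q2(2) q' unfolding adjR_def by blast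
        then show ?thesis by blast
      qed
    qed
    then show ?thesis ..
  qed
next
  assume l: "Suc (fst q) = i0 \<and> Suc i0' = i0"
  show ?thesis
  proof (cases "\<exists>q1\<in>R - {q}. lnq q1 = c")
    case False
    then have "\<forall>q1\<in>R. lnq q1 = c \<longrightarrow> q1 = q" by blast
    then have "adjL S R c i0" using q l adjL_single by blast
    then show ?thesis ..
  next
    case True
    then obtain q1 where q1: "q1 \<in> R" "q1 \<noteq> q" "lnq q1 = c" by blast
    have ne: "fst q1 \<noteq> fst q" using q1 q lnq_fst_eq[of q1 q] by auto
    have "\<not> adjR S (R - {q}) c i0'"
    proof
      assume Rr: "adjR S (R - {q}) c i0'"
      have q1': "q1 \<in> R - {q}" using q1 by blast
      then have "i0' \<le> fst q1" using Rr q1(3) unfolding adjR_def by blast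
      then have le: "fst q \<le> fst q1" using l ne by simp
      have "i0' \<le> fst q" using l by simp
      then have "q \<in> R - {q}" using Rr q1' q1(3) le q(2) RS q(1) unfolding adjR_def by blast
      then show False by simp
    qed
    then have L: "adjL S (R - {q}) c i0'" using a by blast
    have "adjL S R c i0"
      unfolding adjL_def
    proof (intro ballI impI conjI)
      fix q2 assume q2: "q2 \<in> R" "lnq q2 = c"
      show "fst q2 < i0"
      proof (cases "q2 = q")
        case False
        then have "q2 \<in> R - {q}" using q2 by blast
        then have "fst q2 < i0'" using L q2(2) unfolding adjL_def by blast
        then show ?thesis using l by simp
      qed (use l in simp)
      fix q' assume q': "q' \<in> S" "lnq q' = c" "fst q2 \<le> fst q'" "fst q' < i0"
      show "q' \<in> R"
      proof (cases "fst q' = fst q")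
        case True then show ?thesis using lnq_fst_eq[of q' q] q' q by auto
      next
        case False
        then have lt: "fst q' < i0'" using q' l by auto
        have "q2 \<noteq> q" using q' l False by auto
        then have "q2 \<in> R - {q}" using q2 by blast
        then have "q' \<in> R - {q}" using L q2(2) q' lt unfolding adjL_def by blast
        then show ?thesis by blast
      qed
    qed
    then show ?thesis ..
  qed
qed


lemma G2:
  assumes fin: "finite R" and RS: "R \<subseteq> S" and q: "q \<in> R" "lnq q = c" and ce: "c \<noteq> e"
    and mv: "(fst q = i0 \<and> i0' = Suc i0) \<or> (Suc (fst q) = i0 \<and> Suc i0' = i0)"
    and Dq: "\<forall>q'\<in>D q. q' \<notin> R - {q}" and Dl: "\<And>q1 q'. q' \<in> D q1 \<Longrightarrow> lnq q' \<noteq> lnq q1"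
  shows "pot S R e c i0 D \<le> pot S (R - {q}) e c i0' D + 1"
proof -
  have Lam: "Lam R e c = Lam (R - {q}) e c" using q by (auto simp: Lam_def)
  have card: "card R = Suc (card (R - {q}))" using fin q(1) card_Suc_Diff1 by metis
  have bb: "bad S R e c i0 D \<Longrightarrow> bad S (R - {q}) e c i0' D"
  proof -
    assume B: "bad S R e c i0 D"
    show ?thesis
    proof (cases "\<exists>q1\<in>R. lnq q1 = c \<and> (\<exists>q'\<in>D q1. q' \<in> R)")
      case True
      then obtain q1 q' where w: "q1 \<in> R" "lnq q1 = c" "q' \<in> D q1" "q' \<in> R" by auto
      have "q' \<noteq> q" using Dl[OF w(3)] w(2) q(2) by auto
      have "q1 \<noteq> q"
      proof
        assume "q1 = q"
        then have "q' \<in> R - {q}" using w \<open>q' \<noteq> q\<close> by auto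
        then show False using Dq w(3) \<open>q1 = q\<close> by auto
      qed
      then show ?thesis using w \<open>q' \<noteq> q\<close> by (auto simp: bad_def)
    next
      case False
      then have nb: "(\<exists>q\<in>R. lnq q = c) \<and> \<not> adjR S R c i0 \<and> \<not> adjL S R c i0"
        using B ce by (auto simp: bad_def)
      have "\<not> adjR S (R - {q}) c i0' \<and> \<not> adjL S (R - {q}) c i0'"
        using G2_adj[OF RS q mv] nb by blast
      moreover have "\<exists>q\<in>R - {q}. lnq q = c"
      proof (rule ccontr)
        assume "\<not> (\<exists>q\<in>R - {q}. lnq q = c)"
        then have "adjR S (R - {q}) c i0'" by (auto simp: adjR_def)
        then show False using \<open>\<not> adjR S (R - {q}) c i0' \<and> \<not> adjL S (R - {q}) c i0'\<close> by simp
      qed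
      ultimately show ?thesis by (auto simp: bad_def)
    qed
  qed
  show ?thesis using Lam card bb by (auto simp: pot_def)
qed


definition Dp :: "nat \<times> nat \<Rightarrow> (nat \<times> nat) set" where
  "Dp q = {q'. (Suc (fst q') = fst q \<and> snd q' = snd q) \<or> (fst q' = fst q \<and> snd q' = Suc (snd q))}"
definition Ds :: "nat \<times> nat \<Rightarrow> (nat \<times> nat) set" where
  "Ds q = {q'. (fst q' = Suc (fst q) \<and> snd q' = snd q) \<or> (fst q' = fst q \<and> Suc (snd q') = snd q)}"

definition PhW :: "nat \<Rightarrow> nat \<Rightarrow> cell list \<Rightarrow> nat \<Rightarrow> int" where
  "PhW n m ws g = pot (Sq n m) (Uf n m ws) (int m) (hgt ws g) (cW g ws) Dp"
definition PsW :: "nat \<Rightarrow> nat \<Rightarrow> cell list \<Rightarrow> nat \<Rightarrow> int" where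
  "PsW n m ws g = pot (Sq n m) (Fl n m ws) (- int n) (hgt ws g) (cW g ws) Ds"

lemma Dp_line: "q' \<in> Dp q1 \<Longrightarrow> lnq q' \<noteq> lnq q1"
  by (cases q', cases q1) (auto simp: Dp_def lnq_def)
lemma Ds_line: "q' \<in> Ds q1 \<Longrightarrow> lnq q' \<noteq> lnq q1"
  by (cases q', cases q1) (auto simp: Ds_def lnq_def)

lemma lnq_Sq: "q \<in> Sq n m \<Longrightarrow> - int n < lnq q \<and> lnq q < int m"
  by (cases q) (auto simp: Sq_iff lnq_def)

lemma finite_Fl[simp]: "finite (Fl n m ws)" by (rule finite_subset[OF Fl_sub]) simp
lemma finite_Uf[simp]: "finite (Uf n m ws)" by (rule finite_subset[OF Un_sub]) simp

lemma Dp_flipped: "q \<in> Fl n m ws \<Longrightarrow> \<forall>q'\<in>Dp q. q' \<notin> Uf n m ws"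
proof
  fix q' assume a: "q \<in> Fl n m ws" "q' \<in> Dp q"
  obtain i j where q: "q = (i, j)" by fastforce
  show "q' \<notin> Uf n m ws"
  proof
    assume u: "q' \<in> Uf n m ws"
    then have s: "q' \<in> Sq n m" "q' \<notin> Fl n m ws" by (auto simp: Uf_def)
    from a(2) q have "q' = (i - 1, j) \<and> 0 < i \<or> q' = (i, Suc j)"
      by (cases q') (auto simp: Dp_def)
    then show False
    proof
      assume "q' = (i - 1, j) \<and> 0 < i"
      then show False using Fl_down1[of i j n m ws] a(1) q s by auto
    next
      assume "q' = (i, Suc j)"
      then show False using Fl_down2[of i j n m ws] a(1) q s by (auto simp: Sq_iff)
    qed
  qed
qed

lemma Ds_unflipped: "q \<in> Sq n m \<Longrightarrow> q \<notin> Fl n m ws \<Longrightarrow> \<forall>q'\<in>Ds q. q' \<notin> Fl n m ws"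
proof
  fix q' assume a: "q \<in> Sq n m" "q \<notin> Fl n m ws" "q' \<in> Ds q"
  obtain i j where q: "q = (i, j)" by fastforce
  show "q' \<notin> Fl n m ws"
  proof
    assume f: "q' \<in> Fl n m ws"
    from a(3) q have "q' = (Suc i, j) \<or> q' = (i, j - 1) \<and> 0 < j"
      by (cases q') (auto simp: Ds_def)
    then show False
    proof
      assume "q' = (Suc i, j)"
      then show False using Fl_down1[of "Suc i" j n m ws] f a q by auto
    next
      assume h: "q' = (i, j - 1) \<and> 0 < j"
      then have "(i, Suc (j - 1)) \<in> Fl n m ws" using Fl_down2[of i "j - 1" n m ws] f a q
        by (auto simp: Sq_iff)
      then show False using h a q by simp
    qed
  qed
qed



lemma flip_lip:
  assumes w: "wv n m ws" and p: "Suc p < length ws" and b: "ws ! p = Blk" and ww: "ws ! Suc p = Wht"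
    and gg: "(g = p \<and> g' = p + 2) \<or> (g = p + 2 \<and> g' = p)"
  shows "\<bar>PhW n m ws g - PhW n m (swp ws p) g'\<bar> \<le> 1 \<and> \<bar>PsW n m ws g - PsW n m (swp ws p) g'\<bar> \<le> 1"
proof -
  let ?v = "swp ws p"
  define q where "q = (cW p ws, p - cW p ws)"
  note f = flip_BW[OF w p b ww, folded q_def]
  have le: "cW p ws \<le> p" by (rule cW_le)
  have c2: "cW (p + 2) ws = Suc (cW p ws)" using b ww p by (simp add: numeral_2_eq_2 cW_Suc)
  have c2v: "cW (p + 2) ?v = Suc (cW p ws)" using c2 cW_swp[OF p, of "p+2"] by simp
  have c0v: "cW p ?v = cW p ws" using cW_swp_le[OF p] by simp
  have hq: "lnq q = 2 * int (cW p ws) - int p" using le by (simp add: q_def lnq_def)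
  have h1: "hgt ws g = lnq q" "hgt ?v g' = lnq q"
    using gg hq c2 c2v c0v by (auto simp: hgt_def)
  have qU: "q \<in> Uf n m ws" using f by (simp add: Uf_def)
  have UfV: "Uf n m ?v = Uf n m ws - {q}" using f by (auto simp: Uf_def)
  have FlV: "Fl n m ?v = insert q (Fl n m ws)" using f by simp
  have qFv: "q \<in> Fl n m ?v" using FlV by simp
  have lm: "lnq q \<noteq> int m" "lnq q \<noteq> - int n" using lnq_Sq[OF f(1)] by auto
  have mv1: "(fst q = cW g ws \<and> cW g' ?v = Suc (cW g ws)) \<or> (Suc (fst q) = cW g ws \<and> Suc (cW g' ?v) = cW g ws)"
    using gg c2 c2v c0v by (auto simp: q_def)
  have mv2: "(fst q = cW g' ?v \<and> cW g ws = Suc (cW g' ?v)) \<or> (Suc (fst q) = cW g' ?v \<and> Suc (cW g ws) = cW g' ?v)"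
    using gg c2 c2v c0v by (auto simp: q_def)
  have A1: "PhW n m ws g \<le> PhW n m ?v g' + 1"
    unfolding PhW_def h1 UfV
    by (rule G2[OF finite_Uf Un_sub qU refl lm(1) mv1 _ Dp_line])
       (use Dp_flipped[OF qFv] UfV in auto)
  have A2: "PhW n m ?v g' \<le> PhW n m ws g + 1"
  proof -
    have "PhW n m ?v g' \<le> pot (Sq n m) (insert q (Uf n m ?v)) (int m) (lnq q) (cW g ws) Dp"
      unfolding PhW_def h1 by (rule G3) (auto simp: UfV)
    also have "insert q (Uf n m ?v) = Uf n m ws" using UfV qU by auto
    finally show ?thesis unfolding PhW_def h1 by simp
  qed
  have B1: "PsW n m ws g \<le> PsW n m ?v g' + 1"
  proof -
    have "PsW n m ws g \<le> pot (Sq n m) (insert q (Fl n m ws)) (- int n) (lnq q) (cW g' ?v) Ds"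
      unfolding PsW_def h1 by (rule G3) (use f in auto)
    then show ?thesis unfolding PsW_def h1 FlV by simp
  qed
  have B2: "PsW n m ?v g' \<le> PsW n m ws g + 1"
  proof -
    have e: "Fl n m ?v - {q} = Fl n m ws" using FlV f(2) by auto
    have "PsW n m ?v g' \<le> pot (Sq n m) (Fl n m ?v - {q}) (- int n) (lnq q) (cW g ws) Ds + 1"
      unfolding PsW_def h1
      by (rule G2[OF finite_Fl Fl_sub qFv refl lm(2) mv2 _ Ds_line])
         (use Ds_unflipped[OF f(1) f(2)] e in auto)
    then show ?thesis unfolding PsW_def h1 e by simp
  qed
  show ?thesis using A1 A2 B1 B2 by auto
qed


definition dec :: "config \<Rightarrow> cell list \<times> nat" where
  "dec x = (filter (\<lambda>c. c \<noteq> Vac) x, length (takeWhile (\<lambda>c. c \<noteq> Vac) x))"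
definition Phi :: "nat \<Rightarrow> nat \<Rightarrow> config \<Rightarrow> int" where
  "Phi n m x = PhW n m (fst (dec x)) (snd (dec x))"
definition Psi :: "nat \<Rightarrow> nat \<Rightarrow> config \<Rightarrow> int" where
  "Psi n m x = PsW n m (fst (dec x)) (snd (dec x))"
definition vc :: "nat \<Rightarrow> nat \<Rightarrow> config \<Rightarrow> bool" where
  "vc n m x \<longleftrightarrow> (\<exists>ws g. x = cfg ws g \<and> wv n m ws \<and> g \<le> n + m)"

lemma wv_noVac: "wv n m ws \<Longrightarrow> Vac \<notin> set ws"
  by (auto simp: wv_def)

lemma dec_cfg: "Vac \<notin> set ws \<Longrightarrow> g \<le> length ws \<Longrightarrow> dec (cfg ws g) = (ws, g)"
proof -
  assume a: "Vac \<notin> set ws" "g \<le> length ws"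
  have f: "filter (\<lambda>c. c \<noteq> Vac) ws = ws" using a(1) by (induction ws) auto
  have "\<forall>x\<in>set (take g ws). x \<noteq> Vac" using a(1) in_set_takeD by fastforce
  then have t: "takeWhile (\<lambda>c. c \<noteq> Vac) (take g ws @ Vac # drop g ws) = take g ws"
    by (simp add: takeWhile_append2)
  have f1: "filter (\<lambda>c. c \<noteq> Vac) (take g ws) = take g ws"
    using a(1) in_set_takeD by (fastforce intro: filter_True)
  have f2: "filter (\<lambda>c. c \<noteq> Vac) (drop g ws) = drop g ws"
    using a(1) in_set_dropD by (fastforce intro: filter_True)
  have "filter (\<lambda>c. c \<noteq> Vac) (take g ws @ Vac # drop g ws) = ws"
    using f1 f2 by simp
  then show ?thesis using t a(2) by (simp add: dec_def cfg_def)
qed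

lemma dec_wv: "wv n m ws \<Longrightarrow> g \<le> n + m \<Longrightarrow> dec (cfg ws g) = (ws, g)"
proof -
  assume w: "wv n m ws" and g: "g \<le> n + m"
  have "g \<le> length ws" using w g by (simp add: wv_def)
  then show ?thesis using dec_cfg[OF wv_noVac[OF w]] by simp
qed
lemma Phi_cfg: "wv n m ws \<Longrightarrow> g \<le> n + m \<Longrightarrow> Phi n m (cfg ws g) = PhW n m ws g"
  using dec_wv by (simp add: Phi_def)
lemma Psi_cfg: "wv n m ws \<Longrightarrow> g \<le> n + m \<Longrightarrow> Psi n m (cfg ws g) = PsW n m ws g"
  using dec_wv by (simp add: Psi_def)

lemma letter_BW: "wv n m ws \<Longrightarrow> k < length ws \<Longrightarrow> ws ! k = Blk \<or> ws ! k = Wht"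
proof -
  assume "wv n m ws" "k < length ws"
  then have "ws ! k \<in> set ws" "set ws \<subseteq> {Blk, Wht}" by (auto simp: wv_def)
  then show ?thesis by blast
qed

lemma jump_lip:
  assumes w: "wv n m ws" and p: "Suc p < length ws"
    and gg: "(g = p \<and> g' = p + 2) \<or> (g = p + 2 \<and> g' = p)"
  shows "\<bar>PhW n m ws g - PhW n m (swp ws p) g'\<bar> \<le> 1 \<and> \<bar>PsW n m ws g - PsW n m (swp ws p) g'\<bar> \<le> 1"
proof -
  have l1: "ws ! p = Blk \<or> ws ! p = Wht" using letter_BW[OF w] p by simp
  have l2: "ws ! Suc p = Blk \<or> ws ! Suc p = Wht" using letter_BW[OF w p] .
  show ?thesis
  proof (cases "ws ! p = ws ! Suc p")
    case True
    then have e: "swp ws p = ws" using swp_same[OF p] by simp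
    show ?thesis unfolding e PhW_def PsW_def
      using G1[OF finite_Uf, of "Sq n m" n m ws "int m" "hgt ws g" "cW g ws" Dp "hgt ws g'" "cW g' ws"]
            G1[OF finite_Uf, of "Sq n m" n m ws "int m" "hgt ws g'" "cW g' ws" Dp "hgt ws g" "cW g ws"]
            G1[OF finite_Fl, of "Sq n m" n m ws "- int n" "hgt ws g" "cW g ws" Ds "hgt ws g'" "cW g' ws"]
            G1[OF finite_Fl, of "Sq n m" n m ws "- int n" "hgt ws g'" "cW g' ws" Ds "hgt ws g" "cW g ws"]
      by linarith
  next
    case False
    then have "(ws ! p = Blk \<and> ws ! Suc p = Wht) \<or> (ws ! p = Wht \<and> ws ! Suc p = Blk)"
      using l1 l2 by auto
    then show ?thesis
    proof
      assume "ws ! p = Blk \<and> ws ! Suc p = Wht"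
      then show ?thesis using flip_lip[OF w p _ _ gg] by simp
    next
      assume bw: "ws ! p = Wht \<and> ws ! Suc p = Blk"
      let ?v = "swp ws p"
      have w': "wv n m ?v" by (rule wv_swp[OF w p])
      have p': "Suc p < length ?v" using p by simp
      have b': "?v ! p = Blk" "?v ! Suc p = Wht" using bw p by (auto simp: swp_nth)
      have gg': "(g' = p \<and> g = p + 2) \<or> (g' = p + 2 \<and> g = p)" using gg by auto
      have "\<bar>PhW n m ?v g' - PhW n m (swp ?v p) g\<bar> \<le> 1 \<and> \<bar>PsW n m ?v g' - PsW n m (swp ?v p) g\<bar> \<le> 1"
        by (rule flip_lip[OF w' p' b' gg'])
      then show ?thesis using swp_swp[OF p] by (simp add: abs_minus_commute)
    qed
  qed
qed

lemma lip_cfg: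
  assumes v: "vc n m x" and lm: "legal_move x y"
  shows "vc n m y \<and> \<bar>Phi n m x - Phi n m y\<bar> \<le> 1 \<and> \<bar>Psi n m x - Psi n m y\<bar> \<le> 1"
proof -
  obtain ws g where x: "x = cfg ws g" and w: "wv n m ws" and g: "g \<le> n + m"
    using v by (auto simp: vc_def)
  have len: "length ws = n + m" using w by (simp add: wv_def)
  have nv: "Vac \<notin> set ws" using wv_noVac[OF w] .
  have G1s: "\<And>g'. g' \<le> n + m \<Longrightarrow> \<bar>PhW n m ws g - PhW n m ws g'\<bar> \<le> 1 \<and> \<bar>PsW n m ws g - PsW n m ws g'\<bar> \<le> 1"
  proof -
    fix g' :: nat
    show "\<bar>PhW n m ws g - PhW n m ws g'\<bar> \<le> 1 \<and> \<bar>PsW n m ws g - PsW n m ws g'\<bar> \<le> 1"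
      unfolding PhW_def PsW_def
      using G1[OF finite_Uf, of "Sq n m" n m ws "int m" "hgt ws g" "cW g ws" Dp "hgt ws g'" "cW g' ws"]
            G1[OF finite_Uf, of "Sq n m" n m ws "int m" "hgt ws g'" "cW g' ws" Dp "hgt ws g" "cW g ws"]
            G1[OF finite_Fl, of "Sq n m" n m ws "- int n" "hgt ws g" "cW g ws" Ds "hgt ws g'" "cW g' ws"]
            G1[OF finite_Fl, of "Sq n m" n m ws "- int n" "hgt ws g'" "cW g' ws" Ds "hgt ws g" "cW g ws"]
      by linarith
  qed
  have gl: "g \<le> length ws" using g len by simp
  from legal_cfg[OF nv gl lm[unfolded x]] show ?thesis
  proof (elim disjE conjE)
    assume a: "g < length ws" "y = cfg ws (Suc g)"
    have g': "Suc g \<le> n + m" using a len by simp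
    have "vc n m y" unfolding vc_def using a(2) w g' by blast
    then show ?thesis using G1s[OF g'] x a(2) Phi_cfg[OF w g] Psi_cfg[OF w g] Phi_cfg[OF w g'] Psi_cfg[OF w g']
      by simp
  next
    assume a: "0 < g" "y = cfg ws (g - 1)"
    have g': "g - 1 \<le> n + m" using g by simp
    have "vc n m y" unfolding vc_def using a(2) w g' by blast
    then show ?thesis using G1s[OF g'] x a(2) Phi_cfg[OF w g] Psi_cfg[OF w g] Phi_cfg[OF w g'] Psi_cfg[OF w g']
      by simp
  next
    assume a: "Suc g < length ws" "y = cfg (swp ws g) (g + 2)"
    have w': "wv n m (swp ws g)" using wv_swp[OF w a(1)] .
    have g': "g + 2 \<le> n + m" using a len by simp
    have "vc n m y" unfolding vc_def using a(2) w' g' by blast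
    then show ?thesis using jump_lip[OF w a(1), of g "g+2"] x a(2)
      Phi_cfg[OF w g] Psi_cfg[OF w g] Phi_cfg[OF w' g'] Psi_cfg[OF w' g'] by simp
  next
    assume a: "2 \<le> g" "y = cfg (swp ws (g - 2)) (g - 2)"
    have p: "Suc (g - 2) < length ws" using a gl by simp
    have w': "wv n m (swp ws (g - 2))" using wv_swp[OF w p] .
    have gg: "g = g - 2 + 2" using a by simp
    have g': "g - 2 \<le> n + m" using g by simp
    have "vc n m y" unfolding vc_def using a(2) w' g' by blast
    moreover have "(g = g - 2 + 2 \<and> g - 2 = g - 2) \<or> (g = g - 2 \<and> g - 2 = g - 2 + 2)" using gg by simp
    ultimately show ?thesis using jump_lip[OF w p, of g "g - 2"] x a(2)
      Phi_cfg[OF w g] Psi_cfg[OF w g] Phi_cfg[OF w' g'] Psi_cfg[OF w' g'] by simp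
  qed
qed


abbreviation wss :: "nat \<Rightarrow> nat \<Rightarrow> cell list" where "wss n m \<equiv> replicate n Blk @ replicate m Wht"
abbreviation wsf :: "nat \<Rightarrow> nat \<Rightarrow> cell list" where "wsf n m \<equiv> replicate m Wht @ replicate n Blk"

lemma cW_rep_BW: "cW k (replicate a Blk @ replicate b Wht) = min (k - a) b"
  by (simp add: cW_def take_append filter_replicate)
lemma cW_rep_WB: "cW k (replicate a Wht @ replicate b Blk) = min k a"
  by (simp add: cW_def take_append filter_replicate)

lemma wv_s: "wv n m (wss n m)" by (auto simp: wv_def cW_rep_BW)
lemma wv_f: "wv n m (wsf n m)" by (auto simp: wv_def cW_rep_WB)

lemma init_cfg: "init_config n m = cfg (wss n m) n"
  by (simp add: init_config_def cfg_def)
lemma final_cfg: "final_config n m = cfg (wsf n m) m"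
  by (simp add: final_config_def cfg_def)

lemma Fl_s: "Fl n m (wss n m) = {}"
  by (auto simp: Fl_def Sq_iff cW_rep_BW)
lemma Fl_f: "Fl n m (wsf n m) = Sq n m"
  by (auto simp: Fl_def Sq_iff cW_rep_WB)

lemma card_Sq: "card (Sq n m) = n * m" by (simp add: Sq_def card_cartesian_product)

lemma lnq_image: assumes "1 \<le> n" "1 \<le> m" shows "lnq ` Sq n m = {- int n<..<int m}"
proof
  show "lnq ` Sq n m \<subseteq> {- int n<..<int m}" using lnq_Sq by fastforce
  show "{- int n<..<int m} \<subseteq> lnq ` Sq n m"
  proof
    fix z assume z: "z \<in> {- int n<..<int m}"
    show "z \<in> lnq ` Sq n m"
    proof (cases "0 \<le> z")
      case True
      then have "(nat z, 0) \<in> Sq n m" "lnq (nat z, 0) = z" using z assms by (auto simp: Sq_iff lnq_def)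
      then show ?thesis by force
    next
      case False
      then have "(0, nat (- z)) \<in> Sq n m" "lnq (0, nat (- z)) = z" using z assms by (auto simp: Sq_iff lnq_def)
      then show ?thesis by force
    qed
  qed
qed

lemma card_range: "card {- int n..int m} = n + m + 1" by simp

lemma range_split: "{- int n..int m} = {- int n, int m} \<union> {- int n<..<int m}" by auto

lemma Phi_s: assumes "1 \<le> n" "1 \<le> m" shows "Phi n m (init_config n m) = int (n * m + n + m)"
proof -
  have U: "Uf n m (wss n m) = Sq n m" using Fl_s by (simp add: Uf_def)
  have h: "hgt (wss n m) n = - int n" "cW n (wss n m) = 0" by (auto simp: hgt_def cW_rep_BW)
  have L: "Lam (Sq n m) (int m) (- int n) = {- int n..int m}"
    unfolding Lam_def lnq_image[OF assms] range_split by auto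
  have nb: "\<not> bad (Sq n m) (Sq n m) (int m) (- int n) 0 Dp"
    using lnq_Sq assms by (force simp: bad_def)
  have P: "Phi n m (init_config n m) = PhW n m (wss n m) n" using Phi_cfg[OF wv_s, of n n m] init_cfg by simp
  show ?thesis unfolding P using nb
    by (simp add: PhW_def U h L card_Sq pot_def)
qed

lemma Phi_f: shows "Phi n m (final_config n m) = 0"
proof -
  have U: "Uf n m (wsf n m) = {}" using Fl_f by (simp add: Uf_def)
  have h: "hgt (wsf n m) m = int m" by (auto simp: hgt_def cW_rep_WB)
  have P: "Phi n m (final_config n m) = PhW n m (wsf n m) m" using Phi_cfg[OF wv_f, of m n m] final_cfg by simp
  show ?thesis unfolding P by (simp add: PhW_def U h pot_def Lam_def bad_def)
qed

lemma Psi_s: shows "Psi n m (init_config n m) = 0"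
proof -
  have h: "hgt (wss n m) n = - int n" by (auto simp: hgt_def cW_rep_BW)
  have P: "Psi n m (init_config n m) = PsW n m (wss n m) n" using Psi_cfg[OF wv_s, of n n m] init_cfg by simp
  show ?thesis unfolding P by (simp add: PsW_def Fl_s h pot_def Lam_def bad_def)
qed

lemma Psi_f: assumes "1 \<le> n" "1 \<le> m" shows "Psi n m (final_config n m) = int (n * m + n + m)"
proof -
  have h: "hgt (wsf n m) m = int m" "cW m (wsf n m) = m" by (auto simp: hgt_def cW_rep_WB)
  have L: "Lam (Sq n m) (- int n) (int m) = {- int n..int m}"
    unfolding Lam_def lnq_image[OF assms] range_split by auto
  have nb: "\<not> bad (Sq n m) (Sq n m) (- int n) (int m) m Ds"
    using lnq_Sq assms by (force simp: bad_def)
  have P: "Psi n m (final_config n m) = PsW n m (wsf n m) m" using Psi_cfg[OF wv_f, of m n m] final_cfg by simp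
  show ?thesis unfolding P using nb
    by (simp add: PsW_def Fl_f h L card_Sq pot_def)
qed

lemma sum_bound:
  assumes w: "wv n m ws" and g: "g \<le> n + m" and n: "1 \<le> n" and m: "1 \<le> m"
  defines "c \<equiv> hgt ws g"
  shows "int (n * m + n + m) \<le> PsW n m ws g + PhW n m ws g"
    and "PsW n m ws g + PhW n m ws g = int (n * m + n + m) \<Longrightarrow>
         \<not> bad (Sq n m) (Fl n m ws) (- int n) c (cW g ws) Ds \<and>
         \<not> bad (Sq n m) (Uf n m ws) (int m) c (cW g ws) Dp \<and>
         Lam (Fl n m ws) (- int n) c \<inter> Lam (Uf n m ws) (int m) c = {c}"
proof -
  let ?F = "Fl n m ws" and ?U = "Uf n m ws"
  let ?A = "Lam ?F (- int n) c" and ?B = "Lam ?U (int m) c"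
  have cFU: "card ?F + card ?U = n * m"
  proof -
    have "card ?F + card ?U = card (?F \<union> ?U)"
      by (rule card_Un_disjoint[symmetric]) (auto simp: Uf_def)
    also have "?F \<union> ?U = Sq n m" using Fl_sub by (auto simp: Uf_def)
    finally show ?thesis using card_Sq by simp
  qed
  have sub: "{- int n..int m} \<subseteq> ?A \<union> ?B"
  proof -
    have "lnq ` Sq n m \<subseteq> lnq ` ?F \<union> lnq ` ?U" by (auto simp: Uf_def)
    then show ?thesis unfolding range_split lnq_image[OF n m, symmetric] Lam_def by auto
  qed
  have fA: "finite ?A" "finite ?B" by auto
  have u: "n + m + 1 \<le> card (?A \<union> ?B)"
    using card_mono[OF _ sub] fA card_range[of n m] by simp
  have cin: "c \<in> ?A \<inter> ?B" by (simp add: Lam_def)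
  have i1: "1 \<le> card (?A \<inter> ?B)" using cin fA by (metis One_nat_def Suc_leI card_gt_0_iff empty_iff finite_Int)
  have cui: "card ?A + card ?B = card (?A \<union> ?B) + card (?A \<inter> ?B)"
    using card_Un_Int[OF fA] by simp
  have eq: "PsW n m ws g + PhW n m ws g = int (card ?F + card ?U) + int (card ?A + card ?B) - 2
      + (if bad (Sq n m) ?F (- int n) c (cW g ws) Ds then 1 else 0)
      + (if bad (Sq n m) ?U (int m) c (cW g ws) Dp then 1 else 0)"
    by (simp add: PsW_def PhW_def pot_def c_def)
  show "int (n * m + n + m) \<le> PsW n m ws g + PhW n m ws g"
    unfolding eq cFU cui using u i1 by simp
  assume T: "PsW n m ws g + PhW n m ws g = int (n * m + n + m)"
  have nb: "\<not> bad (Sq n m) ?F (- int n) c (cW g ws) Ds \<and> \<not> bad (Sq n m) ?U (int m) c (cW g ws) Dp"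
    using T unfolding eq cFU cui using u i1 by (auto split: if_splits)
  have c1: "card (?A \<inter> ?B) = 1" using T unfolding eq cFU cui using u i1 by (auto split: if_splits)
  have "?A \<inter> ?B = {c}"
  proof -
    obtain z where "?A \<inter> ?B = {z}" using c1 card_1_singletonE by blast
    then show ?thesis using cin by auto
  qed
  then show "\<not> bad (Sq n m) ?F (- int n) c (cW g ws) Ds \<and> \<not> bad (Sq n m) ?U (int m) c (cW g ws) Dp \<and> ?A \<inter> ?B = {c}"
    using nb by simp
qed


lemma hd_nth0: "p \<noteq> [] \<Longrightarrow> hd p = p ! 0" by (cases p) auto

lemma path_vc:
  assumes p: "is_path p" "hd p = init_config n m"
  shows "k < length p \<Longrightarrow> vc n m (p ! k)"
proof (induction k)
  case 0
  have "p \<noteq> []" using p by (simp add: is_path_def)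
  then have "p ! 0 = cfg (wss n m) n" using p(2) init_cfg hd_nth0 by metis
  then show ?case unfolding vc_def using wv_s[of n m] by (intro exI[of _ "wss n m"] exI[of _ n]) simp
next
  case (Suc k)
  then have "legal_move (p ! k) (p ! Suc k)" using p by (simp add: is_path_def)
  then show ?case using lip_cfg Suc by simp
qed

lemma path_lip:
  assumes p: "is_path p" "hd p = init_config n m" and kj: "k \<le> j" and j: "j < length p"
  shows "\<bar>Phi n m (p ! k) - Phi n m (p ! j)\<bar> \<le> int (j - k) \<and> \<bar>Psi n m (p ! k) - Psi n m (p ! j)\<bar> \<le> int (j - k)"
  using kj j
proof (induction j rule: dec_induct)
  case base
  then show ?case by simp
next
  case (step j)
  have v: "vc n m (p ! j)" using path_vc[OF p] step by simp
  have "legal_move (p ! j) (p ! Suc j)" using p step by (simp add: is_path_def)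
  then have "\<bar>Phi n m (p ! j) - Phi n m (p ! Suc j)\<bar> \<le> 1 \<and> \<bar>Psi n m (p ! j) - Psi n m (p ! Suc j)\<bar> \<le> 1"
    using lip_cfg[OF v] by simp
  moreover have "\<bar>Phi n m (p ! k) - Phi n m (p ! j)\<bar> \<le> int (j - k) \<and> \<bar>Psi n m (p ! k) - Psi n m (p ! j)\<bar> \<le> int (j - k)"
    using step by simp
  moreover have "int (Suc j - k) = int (j - k) + 1" using step by simp
  ultimately show ?case by linarith
qed

lemma sol_facts:
  assumes "solution n m q"
  shows "q \<noteq> []" "q ! 0 = init_config n m" "q ! (length q - 1) = final_config n m"
  using assms by (auto simp: solution_def is_path_def hd_nth0 last_conv_nth)

lemma sol_len:
  assumes s: "solution n m q" and n: "1 \<le> n" and m: "1 \<le> m"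
  shows "n * m + n + m + 1 \<le> length q"
proof -
  note f = sol_facts[OF s]
  have p: "is_path q" "hd q = init_config n m" using s by (auto simp: solution_def)
  have "\<bar>Phi n m (q ! 0) - Phi n m (q ! (length q - 1))\<bar> \<le> int (length q - 1 - 0)"
    using path_lip[OF p, of 0 "length q - 1"] f(1) by simp
  then have "int (n * m + n + m) \<le> int (length q - 1)" using f Phi_s[OF n m] Phi_f by simp
  then have "n * m + n + m \<le> length q - 1" by (simp only: of_nat_le_iff)
  then show ?thesis using f(1) by (cases q) auto
qed

lemma tight:
  assumes s: "solution n m q" and n: "1 \<le> n" and m: "1 \<le> m" and L: "length q = n * m + n + m + 1"
    and k: "k < length q"
  shows "Psi n m (q ! k) = int k \<and> Phi n m (q ! k) = int (n * m + n + m - k)"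
proof -
  note f = sol_facts[OF s]
  have p: "is_path q" "hd q = init_config n m" using s by (auto simp: solution_def)
  have a: "Psi n m (q ! k) \<le> int k"
    using path_lip[OF p, of 0 k] k f(2) Psi_s by auto
  have b: "Phi n m (q ! k) \<le> int (n * m + n + m - k)"
    using path_lip[OF p, of k "length q - 1"] k f(3) Phi_f L by auto
  obtain ws g where x: "q ! k = cfg ws g" and w: "wv n m ws" and g: "g \<le> n + m"
    using path_vc[OF p k] by (auto simp: vc_def)
  have "int (n * m + n + m) \<le> Psi n m (q ! k) + Phi n m (q ! k)"
    using sum_bound(1)[OF w g n m] x Phi_cfg[OF w g] Psi_cfg[OF w g] by simp
  then show ?thesis using a b k L by linarith
qed


lemma move_cases:
  assumes w: "wv n m ws" and g: "g \<le> n + m" and lm: "legal_move (cfg ws g) y"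
  shows "(\<exists>g'. y = cfg ws g' \<and> g' \<le> n + m \<and> (g' = g + 1 \<or> g' + 1 = g \<or> g' = g + 2 \<or> g' + 2 = g))
    \<or> (\<exists>p g'. Suc p < length ws \<and> ws ! p = Blk \<and> ws ! Suc p = Wht \<and>
          ((g = p \<and> g' = p + 2) \<or> (g = p + 2 \<and> g' = p)) \<and> y = cfg (swp ws p) g')
    \<or> (\<exists>p g'. Suc p < length ws \<and> ws ! p = Wht \<and> ws ! Suc p = Blk \<and>
          ((g = p \<and> g' = p + 2) \<or> (g = p + 2 \<and> g' = p)) \<and> y = cfg (swp ws p) g')" (is "?A \<or> ?B \<or> ?C")
proof -
  have len: "length ws = n + m" using w by (simp add: wv_def)
  have gl: "g \<le> length ws" using g len by simp
  have jump: "\<And>p g'. Suc p < length ws \<Longrightarrow> ((g = p \<and> g' = p + 2) \<or> (g = p + 2 \<and> g' = p)) \<Longrightarrow>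
      y = cfg (swp ws p) g' \<Longrightarrow> ?A \<or> ?B \<or> ?C"
  proof -
    fix p g' assume a: "Suc p < length ws" "(g = p \<and> g' = p + 2) \<or> (g = p + 2 \<and> g' = p)" "y = cfg (swp ws p) g'"
    have l1: "ws ! p = Blk \<or> ws ! p = Wht" using letter_BW[OF w] a(1) by simp
    have l2: "ws ! Suc p = Blk \<or> ws ! Suc p = Wht" using letter_BW[OF w a(1)] .
    show "?A \<or> ?B \<or> ?C"
    proof (cases "ws ! p = ws ! Suc p")
      case True
      then have "y = cfg ws g'" using swp_same[OF a(1)] a(3) by simp
      moreover have "g' \<le> n + m" using a len by auto
      moreover have "g' = g + 2 \<or> g' + 2 = g" using a(2) by auto
      ultimately show ?thesis by blast
    next
      case False
      then have "(ws ! p = Blk \<and> ws ! Suc p = Wht) \<or> (ws ! p = Wht \<and> ws ! Suc p = Blk)" using l1 l2 by auto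
      then show ?thesis using a by blast
    qed
  qed
  from legal_cfg[OF wv_noVac[OF w] gl lm] show ?thesis
  proof (elim disjE conjE)
    assume "g < length ws" "y = cfg ws (Suc g)"
    then show ?thesis using len by (intro disjI1 exI[of _ "Suc g"]) simp
  next
    assume "0 < g" "y = cfg ws (g - 1)"
    then show ?thesis using g by (intro disjI1 exI[of _ "g - 1"]) simp
  next
    assume "Suc g < length ws" "y = cfg (swp ws g) (g + 2)"
    then show ?thesis using jump[of g "g + 2"] by simp
  next
    assume a: "2 \<le> g" "y = cfg (swp ws (g - 2)) (g - 2)"
    have "Suc (g - 2) < length ws" using a gl by simp
    moreover have "g = g - 2 + 2" using a by simp
    ultimately show ?thesis using jump[of "g - 2" "g - 2"] a by simp
  qed
qed

lemma bw_facts: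
  assumes w: "wv n m ws" and p: "Suc p < length ws" and b: "ws ! p = Blk" and ww: "ws ! Suc p = Wht"
    and gg: "(g = p \<and> g' = p + 2) \<or> (g = p + 2 \<and> g' = p)"
  defines "q \<equiv> (cW p ws, p - cW p ws)"
  shows "q \<in> Sq n m" "q \<notin> Fl n m ws" "Fl n m (swp ws p) = insert q (Fl n m ws)"
    "lnq q = hgt ws g" "hgt (swp ws p) g' = hgt ws g" "wv n m (swp ws p)" "g' \<le> n + m"
    "g = p \<Longrightarrow> cW g ws = fst q \<and> cW g' (swp ws p) = Suc (fst q)"
    "g = p + 2 \<Longrightarrow> cW g ws = Suc (fst q) \<and> cW g' (swp ws p) = fst q"
proof -
  let ?v = "swp ws p"
  note f = flip_BW[OF w p b ww, folded q_def]
  show "q \<in> Sq n m" "q \<notin> Fl n m ws" "Fl n m (swp ws p) = insert q (Fl n m ws)" using f by auto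
  have le: "cW p ws \<le> p" by (rule cW_le)
  have c2: "cW (p + 2) ws = Suc (cW p ws)" using b ww p by (simp add: numeral_2_eq_2 cW_Suc)
  have c2v: "cW (p + 2) ?v = Suc (cW p ws)" using c2 cW_swp[OF p, of "p+2"] by simp
  have c0v: "cW p ?v = cW p ws" using cW_swp_le[OF p] by simp
  have hq: "lnq q = 2 * int (cW p ws) - int p" using le by (simp add: q_def lnq_def)
  show "lnq q = hgt ws g" "hgt (swp ws p) g' = hgt ws g"
    using gg hq c2 c2v c0v by (auto simp: hgt_def)
  show "wv n m (swp ws p)" by (rule wv_swp[OF w p])
  show "g' \<le> n + m" using gg p w by (auto simp: wv_def)
  show "g = p \<Longrightarrow> cW g ws = fst q \<and> cW g' (swp ws p) = Suc (fst q)"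
    using gg c2v by (auto simp: q_def)
  show "g = p + 2 \<Longrightarrow> cW g ws = Suc (fst q) \<and> cW g' (swp ws p) = fst q"
    using gg c2 c0v by (auto simp: q_def)
qed

lemma wb_facts:
  assumes w: "wv n m ws" and p: "Suc p < length ws" and b: "ws ! p = Wht" and ww: "ws ! Suc p = Blk"
    and gg: "(g = p \<and> g' = p + 2) \<or> (g = p + 2 \<and> g' = p)"
  shows "\<exists>q. q \<in> Fl n m ws \<and> Fl n m (swp ws p) = Fl n m ws - {q} \<and> hgt (swp ws p) g' = hgt ws g
     \<and> wv n m (swp ws p) \<and> g' \<le> n + m"
proof -
  let ?v = "swp ws p"
  have w': "wv n m ?v" using wv_swp[OF w p] .
  have p': "Suc p < length ?v" using p by simp
  have b': "?v ! p = Blk" "?v ! Suc p = Wht" using b ww p by (auto simp: swp_nth)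
  have gg': "(g' = p \<and> g = p + 2) \<or> (g' = p + 2 \<and> g = p)" using gg by auto
  note f = bw_facts[OF w' p' b'(1) b'(2) gg']
  have e: "swp ?v p = ws" using swp_swp[OF p] .
  let ?q = "(cW p ?v, p - cW p ?v)"
  have "?q \<in> Fl n m ws" "Fl n m ws = insert ?q (Fl n m ?v)" "?q \<notin> Fl n m ?v" using f(2,3) e by auto
  then have "?q \<in> Fl n m ws \<and> Fl n m ?v = Fl n m ws - {?q}" by auto
  moreover have "hgt ?v g' = hgt ws g" using f(5) e by simp
  moreover have "g' \<le> n + m" using gg p w by (auto simp: wv_def)
  ultimately show ?thesis using w' by blast
qed

lemma has_pred: "s \<in> Sq n m \<Longrightarrow> 1 - int n < lnq s \<Longrightarrow> \<exists>p'\<in>Dp s. p' \<in> Sq n m \<and> lnq p' = lnq s - 1"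
proof -
  assume a: "s \<in> Sq n m" "1 - int n < lnq s"
  obtain i j where s: "s = (i, j)" by fastforce
  show ?thesis
  proof (cases "0 < i")
    case True
    then show ?thesis using a s by (intro bexI[of _ "(i - 1, j)"]) (auto simp: Dp_def Sq_iff lnq_def)
  next
    case False
    then show ?thesis using a s by (intro bexI[of _ "(i, Suc j)"]) (auto simp: Dp_def Sq_iff lnq_def)
  qed
qed

lemma has_succ: "s \<in> Sq n m \<Longrightarrow> lnq s < int m - 1 \<Longrightarrow> \<exists>p'\<in>Ds s. p' \<in> Sq n m \<and> lnq p' = lnq s + 1"
proof -
  assume a: "s \<in> Sq n m" "lnq s < int m - 1"
  obtain i j where s: "s = (i, j)" by fastforce
  show ?thesis
  proof (cases "Suc i < m")
    case True
    then show ?thesis using a s by (intro bexI[of _ "(Suc i, j)"]) (auto simp: Ds_def Sq_iff lnq_def)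
  next
    case False
    then have "0 < j" using a s by (auto simp: Sq_iff lnq_def)
    then show ?thesis using a s by (intro bexI[of _ "(i, j - 1)"]) (auto simp: Ds_def Sq_iff lnq_def)
  qed
qed

lemma line_ex: "1 \<le> n \<Longrightarrow> 1 \<le> m \<Longrightarrow> - int n < z \<Longrightarrow> z < int m \<Longrightarrow> \<exists>s\<in>Sq n m. lnq s = z"
  using lnq_image[of n m] by (metis greaterThanLessThan_iff imageE)


lemma struct:
  assumes n: "1 \<le> n" and m: "1 \<le> m"
    and nbs: "\<not> bad (Sq n m) (Fl n m ws) (- int n) c i0 Ds"
    and nbf: "\<not> bad (Sq n m) (Uf n m ws) (int m) c i0 Dp"
    and cap: "Lam (Fl n m ws) (- int n) c \<inter> Lam (Uf n m ws) (int m) c = {c}"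
    and cr: "- int n < c" "c < int m"
  shows "(\<forall>s\<in>Sq n m. lnq s < c \<longrightarrow> s \<in> Fl n m ws) \<and> (\<forall>s\<in>Sq n m. c < lnq s \<longrightarrow> s \<in> Uf n m ws)"
proof -
  let ?F = "Fl n m ws" and ?U = "Uf n m ws"
  have pure: "\<And>s1 s. s1 \<in> ?U \<Longrightarrow> s \<in> ?F \<Longrightarrow> lnq s1 = lnq s \<Longrightarrow> lnq s = c"
  proof -
    fix s1 s assume a: "s1 \<in> ?U" "s \<in> ?F" "lnq s1 = lnq s"
    have "lnq s \<in> lnq ` ?U" using a(1) a(3) by (metis image_eqI)
    then have "lnq s \<in> Lam ?F (- int n) c \<inter> Lam ?U (int m) c" using a(2) by (auto simp: Lam_def)
    then show "lnq s = c" using cap by blast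
  qed
  have UF: "\<And>s. s \<in> Sq n m \<Longrightarrow> s \<notin> ?F \<Longrightarrow> s \<in> ?U" by (simp add: Uf_def)
  have part1: "\<forall>s\<in>Sq n m. lnq s < c \<longrightarrow> s \<in> ?F"
  proof (rule ccontr)
    assume "\<not> ?thesis"
    then obtain s0 where s0: "s0 \<in> ?U" "lnq s0 < c" using UF by blast
    let ?A = "lnq ` {s \<in> ?U. lnq s < c}"
    have fA: "finite ?A" by simp
    have neA: "?A \<noteq> {}" using s0 by blast
    define c1 where "c1 = Max ?A"
    have c1A: "c1 \<in> ?A" using Max_in[OF fA neA] c1_def by simp
    then obtain s1 where s1: "s1 \<in> ?U" "lnq s1 = c1" "c1 < c" by auto
    have maxA: "\<And>s. s \<in> ?U \<Longrightarrow> lnq s < c \<Longrightarrow> lnq s \<le> c1" using Max_ge[OF fA] c1_def by auto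
    have c1n: "- int n < c1" using lnq_Sq s1 Un_sub by fastforce
    have pu: "\<And>s. s \<in> Sq n m \<Longrightarrow> lnq s = c1 \<Longrightarrow> s \<in> ?U"
    proof -
      fix s assume "s \<in> Sq n m" "lnq s = c1"
      show "s \<in> ?U"
      proof (rule ccontr)
        assume "s \<notin> ?U"
        then have "s \<in> ?F" using \<open>s \<in> Sq n m\<close> by (simp add: Uf_def)
        have "lnq s = c" by (rule pure[OF s1(1) \<open>s \<in> ?F\<close>]) (use s1 \<open>lnq s = c1\<close> in simp)
        then show False using s1 \<open>lnq s = c1\<close> by simp
      qed
    qed
    have c1e: "c1 = c - 1"
    proof (rule ccontr)
      assume "c1 \<noteq> c - 1"
      then have lt: "c1 + 1 < c" using s1 by simp
      obtain s2 where s2: "s2 \<in> Sq n m" "lnq s2 = c1 + 1" using line_ex[OF n m, of "c1 + 1"] c1n lt cr by auto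
      have "s2 \<notin> ?U" using maxA[of s2] s2 lt by auto
      then have s2F: "s2 \<in> ?F" using s2 by (simp add: Uf_def)
      obtain p' where p': "p' \<in> Dp s2" "p' \<in> Sq n m" "lnq p' = c1" using has_pred[OF s2(1)] s2 c1n by auto
      have "p' \<notin> ?U" using Dp_flipped[OF s2F] p' by blast
      then show False using pu[OF p'(2,3)] by simp
    qed
    obtain s3 where s3: "s3 \<in> Sq n m" "lnq s3 = c" using line_ex[OF n m] cr by blast
    obtain p' where p': "p' \<in> Dp s3" "p' \<in> Sq n m" "lnq p' = c - 1" using has_pred[OF s3(1)] s3 c1n c1e by auto
    have p'U: "p' \<in> ?U" using pu[OF p'(2)] p'(3) c1e by simp
    have "s3 \<notin> ?F" using Dp_flipped[of s3 n m ws] p'(1) p'U by blast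
    then have "s3 \<in> ?U" using UF s3 by blast
    then show False using nbf s3 p' p'U by (auto simp: bad_def)
  qed
  have part2: "\<forall>s\<in>Sq n m. c < lnq s \<longrightarrow> s \<in> ?U"
  proof (rule ccontr)
    assume "\<not> ?thesis"
    then obtain s0 where s0: "s0 \<in> ?F" "c < lnq s0" by (auto simp: Uf_def)
    let ?B = "lnq ` {s \<in> ?F. c < lnq s}"
    have fB: "finite ?B" by simp
    have neB: "?B \<noteq> {}" using s0 by blast
    define c1 where "c1 = Min ?B"
    have c1B: "c1 \<in> ?B" using Min_in[OF fB neB] c1_def by simp
    then obtain s1 where s1: "s1 \<in> ?F" "lnq s1 = c1" "c < c1" by auto
    have minB: "\<And>s. s \<in> ?F \<Longrightarrow> c < lnq s \<Longrightarrow> c1 \<le> lnq s" using Min_le[OF fB] c1_def by auto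
    have c1m: "c1 < int m" using lnq_Sq s1 Fl_sub by fastforce
    have pu: "\<And>s. s \<in> Sq n m \<Longrightarrow> lnq s = c1 \<Longrightarrow> s \<in> ?F"
    proof -
      fix s assume "s \<in> Sq n m" "lnq s = c1"
      show "s \<in> ?F"
      proof (rule ccontr)
        assume "s \<notin> ?F"
        then have "s \<in> ?U" using \<open>s \<in> Sq n m\<close> by (simp add: Uf_def)
        have "lnq s1 = c" by (rule pure[OF \<open>s \<in> ?U\<close> s1(1)]) (use s1 \<open>lnq s = c1\<close> in simp)
        then show False using s1 by simp
      qed
    qed
    have c1e: "c1 = c + 1"
    proof (rule ccontr)
      assume "c1 \<noteq> c + 1"
      then have lt: "c < c1 - 1" using s1 by simp
      obtain s2 where s2: "s2 \<in> Sq n m" "lnq s2 = c1 - 1" using line_ex[OF n m, of "c1 - 1"] c1m lt cr by auto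
      have "s2 \<notin> ?F" using minB[of s2] s2 lt by auto
      obtain p' where p': "p' \<in> Ds s2" "p' \<in> Sq n m" "lnq p' = c1" using has_succ[OF s2(1)] s2 c1m by auto
      have "p' \<notin> ?F" using Ds_unflipped[OF s2(1) \<open>s2 \<notin> ?F\<close>] p' by blast
      then show False using pu[OF p'(2,3)] by simp
    qed
    obtain s3 where s3: "s3 \<in> Sq n m" "lnq s3 = c" using line_ex[OF n m] cr by blast
    obtain p' where p': "p' \<in> Ds s3" "p' \<in> Sq n m" "lnq p' = c + 1" using has_succ[OF s3(1)] s3 c1m c1e by auto
    have p'F: "p' \<in> ?F" using pu[OF p'(2)] p'(3) c1e by simp
    have "s3 \<in> ?F" using Ds_unflipped[OF s3(1)] p'(1) p'F by blast
    then show False using nbs s3 p' p'F by (auto simp: bad_def)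
  qed
  show ?thesis using part1 part2 by blast
qed


lemma hgt_range: assumes w: "wv n m ws" and g: "g \<le> n + m"
  shows "- int n \<le> hgt ws g \<and> hgt ws g \<le> int m \<and> cW g ws \<le> m \<and> g - cW g ws \<le> n"
proof -
  have set: "set ws \<subseteq> {Blk, Wht}" and len: "length ws = n + m" using w by (auto simp: wv_def)
  have a: "cW g ws + cB g ws = g" using cW_cB[OF set] g len by simp
  have b: "cW g ws \<le> m" using cW_mono[OF g, of ws] w by (simp add: wv_def)
  have c: "cB g ws \<le> n" using cB_mono[OF g, of ws] wv_cB[OF w] by simp
  show ?thesis using a b c by (auto simp: hgt_def)
qed

lemma unflip_not_tight:
  assumes w: "wv n m ws" and p: "Suc p < length ws" and b: "ws ! p = Wht" and ww: "ws ! Suc p = Blk"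
    and gg: "(g = p \<and> g' = p + 2) \<or> (g = p + 2 \<and> g' = p)"
  shows "Psi n m (cfg (swp ws p) g') \<le> PsW n m ws g"
proof -
  obtain q where q: "q \<in> Fl n m ws" "Fl n m (swp ws p) = Fl n m ws - {q}" "hgt (swp ws p) g' = hgt ws g"
    "wv n m (swp ws p)" "g' \<le> n + m" using wb_facts[OF w p b ww gg] by blast
  have "Psi n m (cfg (swp ws p) g') = pot (Sq n m) (Fl n m ws - {q}) (- int n) (hgt ws g) (cW g' (swp ws p)) Ds"
    using Psi_cfg[OF q(4,5)] q(2,3) by (simp add: PsW_def)
  also have "\<dots> \<le> pot (Sq n m) (insert q (Fl n m ws - {q})) (- int n) (hgt ws g) (cW g ws) Ds"
    by (rule G3) auto
  also have "insert q (Fl n m ws - {q}) = Fl n m ws" using q(1) by auto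
  finally show ?thesis by (simp add: PsW_def)
qed

lemma hgt_Suc: "g < length ws \<Longrightarrow> hgt ws (Suc g) = hgt ws g + (if ws ! g = Wht then 1 else -1)"
  by (simp add: hgt_def cW_Suc)


lemma L4:
  assumes n: "2 \<le> n" and m: "2 \<le> m" and w: "wv n m ws" and g: "g \<le> n + m"
    and bal: "PsW n m ws g + PhW n m ws g = int (n * m + n + m)"
    and P1: "1 \<le> PsW n m ws g" and Q1: "1 \<le> PhW n m ws g"
    and y1: "legal_move (cfg ws g) y1" "Psi n m y1 = PsW n m ws g + 1" "Phi n m y1 = PhW n m ws g - 1"
    and y2: "legal_move (cfg ws g) y2" "Psi n m y2 = PsW n m ws g + 1" "Phi n m y2 = PhW n m ws g - 1"
  shows "y1 = y2"
proof -
  have n1: "1 \<le> n" and m1: "1 \<le> m" using n m by auto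
  have len: "length ws = n + m" using w by (simp add: wv_def)
  define c where "c = hgt ws g"
  define i0 where "i0 = cW g ws"
  let ?F = "Fl n m ws" and ?U = "Uf n m ws"
  have sb: "\<not> bad (Sq n m) ?F (- int n) c i0 Ds \<and> \<not> bad (Sq n m) ?U (int m) c i0 Dp \<and>
      Lam ?F (- int n) c \<inter> Lam ?U (int m) c = {c}"
    using sum_bound(2)[OF w g n1 m1 bal] unfolding c_def i0_def .
  then have nbs: "\<not> bad (Sq n m) ?F (- int n) c i0 Ds" and nbf: "\<not> bad (Sq n m) ?U (int m) c i0 Dp"
    and cap: "Lam ?F (- int n) c \<inter> Lam ?U (int m) c = {c}" by auto
  have PsWg: "PsW n m ws g = pot (Sq n m) ?F (- int n) c i0 Ds" by (simp add: PsW_def c_def i0_def)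
  have PhWg: "PhW n m ws g = pot (Sq n m) ?U (int m) c i0 Dp" by (simp add: PhW_def c_def i0_def)
  have hr: "- int n \<le> c \<and> c \<le> int m \<and> i0 \<le> m \<and> g - i0 \<le> n" using hgt_range[OF w g] by (simp add: c_def i0_def)
  have cn: "c \<noteq> - int n"
  proof
    assume cn: "c = - int n"
    then have "?F = {}" using nbs by (auto simp: bad_def)
    then have "PsW n m ws g = 0" unfolding PsWg using nbs cn by (simp add: pot_def Lam_def)
    then show False using P1 by simp
  qed
  have cm: "c \<noteq> int m"
  proof
    assume cm: "c = int m"
    then have "?U = {}" using nbf by (auto simp: bad_def)
    then have "PhW n m ws g = 0" unfolding PhWg using nbf cm by (simp add: pot_def Lam_def)
    then show False using Q1 by simp
  qed
  have cr: "- int n < c" "c < int m" using hr cn cm by auto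
  have st: "(\<forall>s\<in>Sq n m. lnq s < c \<longrightarrow> s \<in> ?F) \<and> (\<forall>s\<in>Sq n m. c < lnq s \<longrightarrow> s \<in> ?U)"
    by (rule struct[OF n1 m1 nbs nbf cap cr])
  define NO where "NO y \<longleftrightarrow> (\<exists>g'. y = cfg ws g' \<and> g' \<le> n + m \<and> (g' = g + 1 \<or> g' + 1 = g \<or> g' = g + 2 \<or> g' + 2 = g))" for y
  define FL where "FL y \<longleftrightarrow> (\<exists>p g'. Suc p < length ws \<and> ws ! p = Blk \<and> ws ! Suc p = Wht \<and>
          ((g = p \<and> g' = p + 2) \<or> (g = p + 2 \<and> g' = p)) \<and> y = cfg (swp ws p) g')" for y
  have cls: "\<And>y. legal_move (cfg ws g) y \<Longrightarrow> Psi n m y = PsW n m ws g + 1 \<Longrightarrow> NO y \<or> FL y"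
  proof -
    fix y assume a: "legal_move (cfg ws g) y" "Psi n m y = PsW n m ws g + 1"
    from move_cases[OF w g a(1)] show "NO y \<or> FL y"
    proof (elim disjE)
      assume "\<exists>g'. y = cfg ws g' \<and> g' \<le> n + m \<and> (g' = g + 1 \<or> g' + 1 = g \<or> g' = g + 2 \<or> g' + 2 = g)"
      then show ?thesis unfolding NO_def by blast
    next
      assume "\<exists>p g'. Suc p < length ws \<and> ws ! p = Blk \<and> ws ! Suc p = Wht \<and>
          ((g = p \<and> g' = p + 2) \<or> (g = p + 2 \<and> g' = p)) \<and> y = cfg (swp ws p) g'"
      then show ?thesis unfolding FL_def by blast
    next
      assume "\<exists>p g'. Suc p < length ws \<and> ws ! p = Wht \<and> ws ! Suc p = Blk \<and>
          ((g = p \<and> g' = p + 2) \<or> (g = p + 2 \<and> g' = p)) \<and> y = cfg (swp ws p) g'"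
      then obtain p g' where "Suc p < length ws" "ws ! p = Wht" "ws ! Suc p = Blk"
          "(g = p \<and> g' = p + 2) \<or> (g = p + 2 \<and> g' = p)" "y = cfg (swp ws p) g'" by blast
      then have "Psi n m y \<le> PsW n m ws g" using unflip_not_tight[OF w] by blast
      then show ?thesis using a(2) by simp
    qed
  qed
  show ?thesis
  proof (cases "\<exists>s\<in>?U. lnq s = c")
    case True
    have noN: "\<And>g'. g' \<le> n + m \<Longrightarrow> PhW n m ws g \<le> PhW n m ws g'"
    proof -
      fix g' assume "g' \<le> n + m"
      have "card (Lam ?U (int m) c) \<le> card (Lam ?U (int m) (hgt ws g'))"
        using True by (intro card_mono) (auto simp: Lam_def)
      then show "PhW n m ws g \<le> PhW n m ws g'" unfolding PhWg using nbf
        by (simp add: PhW_def pot_def)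
    qed
    have flipk: "\<And>y. legal_move (cfg ws g) y \<Longrightarrow> Psi n m y = PsW n m ws g + 1 \<Longrightarrow> Phi n m y = PhW n m ws g - 1 \<Longrightarrow>
       FL y"
    proof -
      fix y assume a: "legal_move (cfg ws g) y" "Psi n m y = PsW n m ws g + 1" "Phi n m y = PhW n m ws g - 1"
      from cls[OF a(1,2)] show "FL y"
      proof
        assume "NO y"
        then obtain g' where "y = cfg ws g'" "g' \<le> n + m" unfolding NO_def by blast
        then have "PhW n m ws g \<le> Phi n m y" using noN Phi_cfg[OF w] by simp
        then show "FL y" using a(3) by simp
      qed
    qed
    obtain p1 g1 where f1: "Suc p1 < length ws" "ws ! p1 = Blk" "ws ! Suc p1 = Wht"
      "(g = p1 \<and> g1 = p1 + 2) \<or> (g = p1 + 2 \<and> g1 = p1)" "y1 = cfg (swp ws p1) g1"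
      using flipk[OF y1] unfolding FL_def by blast
    obtain p2 g2 where f2: "Suc p2 < length ws" "ws ! p2 = Blk" "ws ! Suc p2 = Wht"
      "(g = p2 \<and> g2 = p2 + 2) \<or> (g = p2 + 2 \<and> g2 = p2)" "y2 = cfg (swp ws p2) g2"
      using flipk[OF y2] unfolding FL_def by blast
    have adj: "adjR (Sq n m) ?U c i0 \<or> adjL (Sq n m) ?U c i0" using nbf True by (auto simp: bad_def)
    have mixed: "\<And>pa pb. Suc pa < length ws \<Longrightarrow> ws ! pa = Blk \<Longrightarrow> ws ! Suc pa = Wht \<Longrightarrow> g = pa \<Longrightarrow>
        Suc pb < length ws \<Longrightarrow> ws ! pb = Blk \<Longrightarrow> ws ! Suc pb = Wht \<Longrightarrow> g = pb + 2 \<Longrightarrow> False"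
    proof -
      fix pa pb assume a: "Suc pa < length ws" "ws ! pa = Blk" "ws ! Suc pa = Wht" "g = pa"
        "Suc pb < length ws" "ws ! pb = Blk" "ws ! Suc pb = Wht" "g = pb + 2"
      define qa where "qa = (cW pa ws, pa - cW pa ws)"
      define qb where "qb = (cW pb ws, pb - cW pb ws)"
      note fa = bw_facts[OF w a(1,2,3), of g "pa + 2", folded qa_def]
      note fb = bw_facts[OF w a(5,6,7), of g pb, folded qb_def]
      have qa: "qa \<in> ?U" "lnq qa = c" "fst qa = i0" using fa a(4) by (auto simp: Uf_def c_def i0_def)
      have qb: "qb \<in> ?U" "lnq qb = c" "Suc (fst qb) = i0" using fb a(8) by (auto simp: Uf_def c_def i0_def)
      from adj show False
      proof
        assume "adjR (Sq n m) ?U c i0"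
        then have "i0 \<le> fst qb" using qb unfolding adjR_def by blast
        then show False using qb by simp
      next
        assume "adjL (Sq n m) ?U c i0"
        then have "fst qa < i0" using qa unfolding adjL_def by blast
        then show False using qa by simp
      qed
    qed
    have "p1 = p2"
    proof (rule ccontr)
      assume ne: "p1 \<noteq> p2"
      from f1(4) f2(4) ne show False
        using mixed[OF f1(1,2,3) _ f2(1,2,3)] mixed[OF f2(1,2,3) _ f1(1,2,3)] by auto
    qed
    then show ?thesis using f1 f2 by auto
  next
    case False
    have lineF: "\<And>s. s \<in> Sq n m \<Longrightarrow> lnq s = c \<Longrightarrow> s \<in> ?F" using False by (auto simp: Uf_def)
    obtain sc where sc: "sc \<in> Sq n m" "lnq sc = c" using line_ex[OF n1 m1 cr] by blast
    have nonopp: "\<And>y. legal_move (cfg ws g) y \<Longrightarrow> Psi n m y = PsW n m ws g + 1 \<Longrightarrow> NO y"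
    proof -
      fix y assume a: "legal_move (cfg ws g) y" "Psi n m y = PsW n m ws g + 1"
      from cls[OF a] show "NO y"
      proof
        assume "FL y"
        then obtain p g' where b: "Suc p < length ws" "ws ! p = Blk" "ws ! Suc p = Wht"
          "(g = p \<and> g' = p + 2) \<or> (g = p + 2 \<and> g' = p)" unfolding FL_def by blast
        define q where "q = (cW p ws, p - cW p ws)"
        note fq = bw_facts[OF w b, folded q_def]
        have "q \<in> ?U" "lnq q = c" using fq by (auto simp: Uf_def c_def)
        then show "NO y" using False by blast
      qed
    qed
    have up: "\<And>g'. g' \<le> n + m \<Longrightarrow> PsW n m ws g' = PsW n m ws g + 1 \<Longrightarrow> PhW n m ws g' = PhW n m ws g - 1 \<Longrightarrow>
        hgt ws g' = c + 1"
    proof -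
      fix g' assume g': "g' \<le> n + m" "PsW n m ws g' = PsW n m ws g + 1" "PhW n m ws g' = PhW n m ws g - 1"
      define c' where "c' = hgt ws g'"
      have bal': "PsW n m ws g' + PhW n m ws g' = int (n * m + n + m)" using g' bal by simp
      have sb': "\<not> bad (Sq n m) ?F (- int n) c' (cW g' ws) Ds \<and> \<not> bad (Sq n m) ?U (int m) c' (cW g' ws) Dp \<and>
          Lam ?F (- int n) c' \<inter> Lam ?U (int m) c' = {c'}"
        using sum_bound(2)[OF w g'(1) n1 m1 bal'] unfolding c'_def .
      have hr': "- int n \<le> c' \<and> c' \<le> int m" using hgt_range[OF w g'(1)] by (simp add: c'_def)
      have scF: "sc \<in> ?F" using lineF sc by simp
      have c'n: "c' \<noteq> - int n"
      proof
        assume "c' = - int n"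
        then have "?F = {}" using sb' by (auto simp: bad_def)
        then show False using scF by simp
      qed
      show "hgt ws g' = c + 1"
      proof (cases "c' = int m")
        case True
        then have U0: "?U = {}" using sb' by (auto simp: bad_def)
        have "\<not> c + 1 < int m"
        proof
          assume "c + 1 < int m"
          then obtain s where "s \<in> Sq n m" "lnq s = c + 1" using line_ex[OF n1 m1, of "c+1"] cr by auto
          then have "s \<in> ?U" using st by auto
          then show False using U0 by simp
        qed
        then show ?thesis using True cr by (simp add: c'_def)
      next
        case False
        then have cr': "- int n < c'" "c' < int m" using hr' c'n by auto
        have st': "(\<forall>s\<in>Sq n m. lnq s < c' \<longrightarrow> s \<in> ?F) \<and> (\<forall>s\<in>Sq n m. c' < lnq s \<longrightarrow> s \<in> ?U)"
          using struct[OF n1 m1 _ _ _ cr'] sb' by blast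
        have ge: "c + 1 \<le> c'"
        proof (rule ccontr)
          assume "\<not> c + 1 \<le> c'"
          then have "c' \<le> c" by simp
          show False
          proof (cases "c' = c")
            case True
            have "PsW n m ws g' \<le> PsW n m ws g"
              unfolding PsWg using sb' True by (simp add: PsW_def pot_def c'_def)
            then show False using g'(2) by simp
          next
            case False
            then have "c' < c" using \<open>c' \<le> c\<close> by simp
            then have "sc \<in> ?U" using st' sc by auto
            then show False using scF by (simp add: Uf_def)
          qed
        qed
        have le: "c' \<le> c + 1"
        proof (rule ccontr)
          assume "\<not> c' \<le> c + 1"
          then obtain s where s: "s \<in> Sq n m" "lnq s = c + 1" using line_ex[OF n1 m1, of "c+1"] cr cr' by auto
          have "s \<in> ?U" using st s by auto
          moreover have "s \<in> ?F" using st' s \<open>\<not> c' \<le> c + 1\<close> by auto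
          ultimately show False by (simp add: Uf_def)
        qed
        show ?thesis using ge le by (simp add: c'_def)
      qed
    qed
    obtain g1 where n1': "y1 = cfg ws g1" "g1 \<le> n + m" "g1 = g + 1 \<or> g1 + 1 = g \<or> g1 = g + 2 \<or> g1 + 2 = g"
      using nonopp[OF y1(1,2)] unfolding NO_def by blast
    obtain g2 where n2': "y2 = cfg ws g2" "g2 \<le> n + m" "g2 = g + 1 \<or> g2 + 1 = g \<or> g2 = g + 2 \<or> g2 + 2 = g"
      using nonopp[OF y2(1,2)] unfolding NO_def by blast
    have h1: "hgt ws g1 = c + 1" using up[OF n1'(2)] y1 n1' Psi_cfg[OF w n1'(2)] Phi_cfg[OF w n1'(2)] by simp
    have h2: "hgt ws g2 = c + 1" using up[OF n2'(2)] y2 n2' Psi_cfg[OF w n2'(2)] Phi_cfg[OF w n2'(2)] by simp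
    have hstep: "\<And>g'. g' \<le> n + m \<Longrightarrow> hgt ws g' = c + 1 \<Longrightarrow> (g' = g + 1 \<or> g' + 1 = g \<or> g' = g + 2 \<or> g' + 2 = g) \<Longrightarrow>
        (g' = g + 1 \<and> g < length ws \<and> ws ! g = Wht) \<or> (g' + 1 = g \<and> ws ! g' = Blk)"
    proof -
      fix g' assume a: "g' \<le> n + m" "hgt ws g' = c + 1" "g' = g + 1 \<or> g' + 1 = g \<or> g' = g + 2 \<or> g' + 2 = g"
      have pr: "\<And>k. k < length ws \<Longrightarrow> cW (Suc k) ws = cW k ws + (if ws ! k = Wht then 1 else 0)"
        by (simp add: cW_Suc)
      from a(3) show "(g' = g + 1 \<and> g < length ws \<and> ws ! g = Wht) \<or> (g' + 1 = g \<and> ws ! g' = Blk)"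
      proof (elim disjE)
        assume e: "g' = g + 1"
        then have "g < length ws" using a len by simp
        then show ?thesis using a(2) e pr[of g] by (auto simp: hgt_def c_def split: if_splits)
      next
        assume e: "g' + 1 = g"
        then have "g' < length ws" using g len by simp
        then show ?thesis using a(2) e pr[of g'] letter_BW[OF w, of g'] by (auto simp: hgt_def c_def split: if_splits)
      next
        assume e: "g' = g + 2"
        then have "g < length ws" "Suc g < length ws" using a len by auto
        then show ?thesis using a(2) e pr[of g] pr[of "Suc g"] by (auto simp: hgt_def c_def numeral_2_eq_2 split: if_splits)
      next
        assume e: "g' + 2 = g"
        then have "g' < length ws" "Suc g' < length ws" using g len by auto
        then show ?thesis using a(2) e pr[of g'] pr[of "Suc g'"] by (auto simp: hgt_def c_def numeral_2_eq_2 split: if_splits)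
      qed
    qed
    have d1: "(g1 = g + 1 \<and> g < length ws \<and> ws ! g = Wht) \<or> (g1 + 1 = g \<and> ws ! g1 = Blk)"
      using hstep[OF n1'(2) h1 n1'(3)] .
    have d2: "(g2 = g + 1 \<and> g < length ws \<and> ws ! g = Wht) \<or> (g2 + 1 = g \<and> ws ! g2 = Blk)"
      using hstep[OF n2'(2) h2 n2'(3)] .
    have tb: "\<And>g'. g' \<le> n + m \<Longrightarrow> (y1 = cfg ws g' \<or> y2 = cfg ws g') \<Longrightarrow>
        PsW n m ws g' = PsW n m ws g + 1 \<and> PhW n m ws g' = PhW n m ws g - 1 \<and> hgt ws g' = c + 1"
    proof -
      fix g' assume a: "g' \<le> n + m" "y1 = cfg ws g' \<or> y2 = cfg ws g'"
      have t: "PsW n m ws g' = PsW n m ws g + 1 \<and> PhW n m ws g' = PhW n m ws g - 1"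
        using a y1 y2 Psi_cfg[OF w a(1)] Phi_cfg[OF w a(1)] by auto
      then show "PsW n m ws g' = PsW n m ws g + 1 \<and> PhW n m ws g' = PhW n m ws g - 1 \<and> hgt ws g' = c + 1" using up[OF a(1)] by simp
    qed
    have nbfat: "\<And>g'. g' \<le> n + m \<Longrightarrow> (y1 = cfg ws g' \<or> y2 = cfg ws g') \<Longrightarrow>
        \<not> bad (Sq n m) ?U (int m) (c + 1) (cW g' ws) Dp"
    proof -
      fix g' assume a: "g' \<le> n + m" "y1 = cfg ws g' \<or> y2 = cfg ws g'"
      note t = tb[OF a]
      have "PsW n m ws g' + PhW n m ws g' = int (n * m + n + m)" using t bal by simp
      then show "\<not> bad (Sq n m) ?U (int m) (c + 1) (cW g' ws) Dp" using sum_bound(2)[OF w a(1) n1 m1] t by simp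
    qed
    have "g1 = g2"
    proof (rule ccontr)
      assume ne: "g1 \<noteq> g2"
      have "\<exists>gb. g < length ws \<and> ws ! g = Wht \<and> gb + 1 = g \<and> ws ! gb = Blk \<and>
           (y1 = cfg ws (g + 1) \<or> y2 = cfg ws (g + 1)) \<and> (y1 = cfg ws gb \<or> y2 = cfg ws gb)"
        using d1 d2 ne n1'(1) n2'(1) by auto
      then obtain gb where a: "g < length ws" "ws ! g = Wht" "gb + 1 = g" "ws ! gb = Blk"
        "y1 = cfg ws (g + 1) \<or> y2 = cfg ws (g + 1)" "y1 = cfg ws gb \<or> y2 = cfg ws gb" by blast
      have ga_le: "g + 1 \<le> n + m" using a(1) len by simp
      have gb_le: "gb \<le> n + m" using a(3) g by simp
      define j0 where "j0 = g - i0"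
      have set: "set ws \<subseteq> {Blk, Wht}" using w by (simp add: wv_def)
      have cWg1: "cW (Suc g) ws = Suc i0" using a by (simp add: cW_Suc i0_def)
      have "cW (Suc g) ws \<le> m" using cW_mono[of "Suc g" "n + m" ws] a len w by (simp add: wv_def)
      then have i0m: "i0 < m" using cWg1 by simp
      have gbl: "gb < length ws" using a(1,3) by simp
      have cWgb: "cW gb ws = i0" using cW_Suc[of gb ws] a(3,4) gbl by (simp add: i0_def)
      have i0g: "i0 \<le> g" using cW_le by (simp add: i0_def)
      have cBg: "cB g ws = j0" using cW_cB[OF set, of g] g len by (simp add: i0_def j0_def)
      have cBgm: "cB g ws = Suc (cB gb ws)" using cB_Suc[of gb ws] a(3,4) gbl by simp
      have j0p: "1 \<le> j0" using cBg cBgm by simp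
      have j0n: "j0 \<le> n" using hr by (simp add: j0_def)
      have cij: "c = int i0 - int j0" using i0g by (simp add: c_def hgt_def i0_def j0_def)
      define qs where "qs = (i0, j0 - 1)"
      have qs: "qs \<in> Sq n m" "lnq qs = c + 1" using i0m j0p j0n cij by (auto simp: qs_def Sq_iff lnq_def)
      have qsU: "qs \<in> ?U" using st qs by auto
      have nba: "\<not> bad (Sq n m) ?U (int m) (c + 1) (Suc i0) Dp"
        using nbfat[OF ga_le a(5)] cWg1 by simp
      have nbb: "\<not> bad (Sq n m) ?U (int m) (c + 1) i0 Dp"
        using nbfat[OF gb_le a(6)] cWgb by simp
      have adja: "adjR (Sq n m) ?U (c + 1) (Suc i0) \<or> adjL (Sq n m) ?U (c + 1) (Suc i0)"
        using nba qsU qs by (auto simp: bad_def)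
      have adjb: "adjR (Sq n m) ?U (c + 1) i0 \<or> adjL (Sq n m) ?U (c + 1) i0"
        using nbb qsU qs by (auto simp: bad_def)
      have La: "adjL (Sq n m) ?U (c + 1) (Suc i0)"
      proof -
        have "\<not> adjR (Sq n m) ?U (c + 1) (Suc i0)"
        proof
          assume "adjR (Sq n m) ?U (c + 1) (Suc i0)"
          then have "Suc i0 \<le> fst qs" using qsU qs unfolding adjR_def by blast
          then show False by (simp add: qs_def)
        qed
        then show ?thesis using adja by blast
      qed
      have Rb: "adjR (Sq n m) ?U (c + 1) i0"
      proof -
        have "\<not> adjL (Sq n m) ?U (c + 1) i0"
        proof
          assume "adjL (Sq n m) ?U (c + 1) i0"
          then have "fst qs < i0" using qsU qs unfolding adjL_def by blast
          then show False by (simp add: qs_def)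
        qed
        then show ?thesis using adjb by blast
      qed
      have only: "\<And>s. s \<in> Sq n m \<Longrightarrow> lnq s = c + 1 \<Longrightarrow> fst s = i0"
      proof -
        fix s assume s: "s \<in> Sq n m" "lnq s = c + 1"
        have sU: "s \<in> ?U" using st s by auto
        have "fst s < Suc i0" using La sU s unfolding adjL_def by blast
        moreover have "i0 \<le> fst s" using Rb sU s unfolding adjR_def by blast
        ultimately show "fst s = i0" by simp
      qed
      have scF: "sc \<in> ?F" using lineF sc by simp
      have adjx: "adjR (Sq n m) ?F c i0 \<or> adjL (Sq n m) ?F c i0"
        using nbs scF sc by (auto simp: bad_def)
      have cnn: "\<not> (i0 = 0 \<and> j0 = n)" using cn cij by auto
      from adjx show False
      proof
        assume R: "adjR (Sq n m) ?F c i0"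
        have i00: "i0 = 0"
        proof (rule ccontr)
          assume "i0 \<noteq> 0"
          define s where "s = (i0 - 1, j0 - 1)"
          have "s \<in> Sq n m" "lnq s = c" using \<open>i0 \<noteq> 0\<close> i0m j0p j0n cij by (auto simp: s_def Sq_iff lnq_def)
          then have "s \<in> ?F" using lineF by simp
          then have "i0 \<le> fst s" using R \<open>lnq s = c\<close> unfolding adjR_def by blast
          then show False using \<open>i0 \<noteq> 0\<close> by (simp add: s_def)
        qed
        have "j0 = n"
        proof (rule ccontr)
          assume "j0 \<noteq> n"
          define s where "s = (1::nat, j0)"
          have "s \<in> Sq n m" "lnq s = c + 1" using \<open>j0 \<noteq> n\<close> j0n m i00 cij by (auto simp: s_def Sq_iff lnq_def)
          then have "fst s = i0" using only by blast
          then show False using i00 by (simp add: s_def)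
        qed
        then show False using cnn i00 by simp
      next
        assume Lx: "adjL (Sq n m) ?F c i0"
        have j0e: "j0 = n"
        proof (rule ccontr)
          assume "j0 \<noteq> n"
          define s where "s = (i0, j0)"
          have "s \<in> Sq n m" "lnq s = c" using \<open>j0 \<noteq> n\<close> j0n i0m cij by (auto simp: s_def Sq_iff lnq_def)
          then have "s \<in> ?F" using lineF by simp
          then have "fst s < i0" using Lx \<open>lnq s = c\<close> unfolding adjL_def by blast
          then show False by (simp add: s_def)
        qed
        have "i0 = 0"
        proof (rule ccontr)
          assume "i0 \<noteq> 0"
          define s where "s = (i0 - 1, j0 - 2)"
          have "s \<in> Sq n m" "lnq s = c + 1" using \<open>i0 \<noteq> 0\<close> j0e n i0m cij by (auto simp: s_def Sq_iff lnq_def)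
          then have "fst s = i0" using only by blast
          then show False using \<open>i0 \<noteq> 0\<close> by (simp add: s_def)
        qed
        then show False using cnn j0e by simp
      qed
    qed
    then show ?thesis using n1' n2' by simp
  qed
qed


lemma cfg_nth_in: "g \<le> length ws \<Longrightarrow> k < Suc (length ws) \<Longrightarrow> k \<noteq> g \<Longrightarrow> cfg ws g ! k \<in> set ws"
  by (auto simp: cfg_nth intro!: nth_mem)

lemma nth_nV: "Vac \<notin> set ws \<Longrightarrow> k < length ws \<Longrightarrow> ws ! k \<noteq> Vac"
  using nth_mem by force

lemma lm_right: "Vac \<notin> set ws \<Longrightarrow> g < length ws \<Longrightarrow> legal_move (cfg ws g) (cfg ws (Suc g))"
  unfolding legal_move_def
  apply (rule exI[of _ g], rule exI[of _ "Suc g"])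
  apply (auto simp: cfg_nth nth_nV)
  apply (rule sym, rule cfg_eqI)
  apply (auto simp: cfg_nth nth_list_update)
  done

lemma lm_left: "Vac \<notin> set ws \<Longrightarrow> 0 < g \<Longrightarrow> g \<le> length ws \<Longrightarrow> legal_move (cfg ws g) (cfg ws (g - 1))"
  unfolding legal_move_def
  apply (rule exI[of _ g], rule exI[of _ "g - 1"])
  apply (auto simp: cfg_nth nth_nV)
  apply (rule sym, rule cfg_eqI)
  apply (auto simp: cfg_nth nth_list_update)
  done

lemma lm_jr: "Vac \<notin> set ws \<Longrightarrow> Suc g < length ws \<Longrightarrow> legal_move (cfg ws g) (cfg (swp ws g) (g + 2))"
  unfolding legal_move_def
  apply (rule exI[of _ g], rule exI[of _ "g + 2"])
  apply (auto simp: cfg_nth nth_nV)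
  apply (rule sym, rule cfg_eqI)
  apply (auto simp: cfg_nth nth_list_update swp_def)
  done

lemma lm_jl: "Vac \<notin> set ws \<Longrightarrow> 2 \<le> g \<Longrightarrow> g \<le> length ws \<Longrightarrow> legal_move (cfg ws g) (cfg (swp ws (g - 2)) (g - 2))"
  unfolding legal_move_def
  apply (rule exI[of _ g], rule exI[of _ "g - 2"])
  apply (auto simp: cfg_nth nth_nV)
  apply (rule sym, rule cfg_eqI)
  apply (auto simp: cfg_nth nth_list_update swp_def)
  done


definition bwp :: "nat \<Rightarrow> cell list" where "bwp k = concat (replicate k [Blk, Wht])"

lemma bwp_0[simp]: "bwp 0 = []" by (simp add: bwp_def)
lemma wb_0[simp]: "wb_pow 0 = []" by (simp add: wb_pow_def)
lemma bwp_Suc: "bwp (Suc j) = Blk # Wht # bwp j" by (simp add: bwp_def)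
lemma wb_Suc: "wb_pow (Suc j) = Wht # Blk # wb_pow j" by (simp add: wb_pow_def)
lemma bwp_Suc': "bwp (Suc j) = bwp j @ [Blk, Wht]"
  by (induction j) (auto simp: bwp_Suc)
lemma wb_Suc': "wb_pow (Suc j) = wb_pow j @ [Wht, Blk]"
  by (induction j) (auto simp: wb_Suc)
lemma B_wb: "Blk # wb_pow j = bwp j @ [Blk]"
  by (induction j) (auto simp: bwp_Suc wb_Suc)
lemma W_bwp_B: "Wht # bwp j @ [Blk] = wb_pow (Suc j)"
  by (simp add: B_wb[symmetric] wb_Suc)
lemma B_wb_W: "Blk # wb_pow j @ [Wht] = bwp (Suc j)"
  by (simp add: B_wb bwp_Suc')
lemma len_bwp[simp]: "length (bwp j) = 2 * j" by (induction j) (auto simp: bwp_Suc)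
lemma len_wb[simp]: "length (wb_pow j) = 2 * j" by (induction j) (auto simp: wb_Suc)
lemma set_bwp: "set (bwp j) \<subseteq> {Blk, Wht}" by (induction j) (auto simp: bwp_Suc)
lemma set_wb: "set (wb_pow j) \<subseteq> {Blk, Wht}" by (induction j) (auto simp: wb_Suc)

lemma swp_mid: "swp (A @ x # y # B) (length A) = A @ y # x # B"
  by (rule nth_equalityI) (auto simp: swp_def nth_append nth_list_update nth_Cons' split: nat.splits)

definition XX :: "nat \<Rightarrow> nat \<Rightarrow> cell list" where
  "XX n k = replicate (n - 1 - k) Blk @ replicate (k + 1 - n) Wht"
definition YY :: "nat \<Rightarrow> nat \<Rightarrow> cell list" where
  "YY m k = replicate (m - 1 - k) Wht @ replicate (k + 1 - m) Blk"
definition LL :: "nat \<Rightarrow> nat \<Rightarrow> nat \<Rightarrow> nat" where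
  "LL n m k = (if k < m then k + 1 else if k < n then m else n + m - 1 - k)"
definition sw :: "nat \<Rightarrow> nat \<Rightarrow> nat \<Rightarrow> nat \<Rightarrow> cell list" where
  "sw n m k t = (if even k then XX n k @ bwp (LL n m k - t) @ wb_pow t @ YY m k
                 else XX n k @ wb_pow t @ bwp (LL n m k - t) @ YY m k)"
definition sg :: "nat \<Rightarrow> nat \<Rightarrow> nat \<Rightarrow> nat \<Rightarrow> nat" where
  "sg n m k t = (if even k then length (XX n k) + 2 * (LL n m k - t) else length (XX n k) + 2 * t)"
definition stg :: "nat \<Rightarrow> nat \<Rightarrow> nat \<Rightarrow> config list" where
  "stg n m k = map (\<lambda>t. cfg (sw n m k t) (sg n m k t)) [0..<Suc (LL n m k)]"

lemma set_XX: "set (XX n k) \<subseteq> {Blk, Wht}" by (auto simp: XX_def)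
lemma set_YY: "set (YY m k) \<subseteq> {Blk, Wht}" by (auto simp: YY_def)
lemma set_sw: "set (sw n m k t) \<subseteq> {Blk, Wht}"
  using set_XX[of n k] set_YY[of m k] set_bwp set_wb by (auto simp: sw_def)
lemma nV_sw: "Vac \<notin> set (sw n m k t)" using set_sw by blast

lemma stage_step:
  assumes t: "t < LL n m k"
  shows "legal_move (cfg (sw n m k t) (sg n m k t)) (cfg (sw n m k (Suc t)) (sg n m k (Suc t)))"
proof -
  obtain s where s: "LL n m k - t = Suc s" using t by (metis Suc_diff_Suc)
  have s': "LL n m k - Suc t = s" using s by simp
  show ?thesis
  proof (cases "even k")
    case True
    let ?A = "XX n k @ bwp s"
    have e1: "sw n m k t = ?A @ Blk # Wht # (wb_pow t @ YY m k)"
      using True s by (simp add: sw_def bwp_Suc')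
    have e2: "sw n m k (Suc t) = ?A @ Wht # Blk # (wb_pow t @ YY m k)"
      using True s' by (simp add: sw_def wb_Suc)
    have g1: "sg n m k t = length ?A + 2" using True s by (simp add: sg_def)
    have g2: "sg n m k (Suc t) = length ?A" using True s' by (simp add: sg_def)
    have "legal_move (cfg (sw n m k t) (length ?A + 2)) (cfg (swp (sw n m k t) (length ?A + 2 - 2)) (length ?A + 2 - 2))"
      by (rule lm_jl[OF nV_sw]) (auto simp: e1)
    moreover have "swp (sw n m k t) (length ?A) = sw n m k (Suc t)" by (simp only: e1 e2 swp_mid)
    ultimately show ?thesis using g1 g2 by simp
  next
    case False
    let ?A = "XX n k @ wb_pow t"
    have e1: "sw n m k t = ?A @ Blk # Wht # (bwp s @ YY m k)"
      using False s by (simp add: sw_def bwp_Suc)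
    have e2: "sw n m k (Suc t) = ?A @ Wht # Blk # (bwp s @ YY m k)"
      using False s' by (simp add: sw_def wb_Suc')
    have g1: "sg n m k t = length ?A" using False by (simp add: sg_def)
    have g2: "sg n m k (Suc t) = length ?A + 2" using False by (simp add: sg_def)
    have "legal_move (cfg (sw n m k t) (length ?A)) (cfg (swp (sw n m k t) (length ?A)) (length ?A + 2))"
      by (rule lm_jr[OF nV_sw]) (auto simp: e1)
    moreover have "swp (sw n m k t) (length ?A) = sw n m k (Suc t)" by (simp only: e1 e2 swp_mid)
    ultimately show ?thesis using g1 g2 by simp
  qed
qed


lemma rep_Suc': "replicate (Suc a) x = replicate a x @ [x]"
  by (simp add: replicate_append_same)

lemma sw_last: "sw n m k (LL n m k) = XX n k @ wb_pow (LL n m k) @ YY m k"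
  by (simp add: sw_def)
lemma sw_first: "sw n m k 0 = XX n k @ bwp (LL n m k) @ YY m k"
  by (simp add: sw_def)

lemma XX_lo: "Suc k < n \<Longrightarrow> XX n k = XX n (Suc k) @ [Blk] \<and> XX n (Suc k) = replicate (n - 2 - k) Blk"
proof -
  assume a: "Suc k < n"
  then have e: "n - 1 - k = Suc (n - 2 - k)" "k + 1 - n = 0" "Suc k + 1 - n = 0" "n - 1 - Suc k = n - 2 - k" by arith+
  show ?thesis unfolding XX_def e by (simp only: rep_Suc' append_Nil2 replicate_0)
qed

lemma XX_hi: "n \<le> k \<Longrightarrow> XX n (Suc k) = XX n k @ [Wht] \<and> XX n k = replicate (k + 1 - n) Wht"
proof -
  assume a: "n \<le> k"
  then have e: "Suc k + 1 - n = Suc (k + 1 - n)" "n - 1 - k = 0" "n - 1 - Suc k = 0" by arith+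
  show ?thesis unfolding XX_def e by (simp only: rep_Suc' append_Nil replicate_0)
qed

lemma XX_at: "Suc k = n \<Longrightarrow> XX n k = [] \<and> XX n (Suc k) = [Wht]"
  by (simp add: XX_def)

lemma YY_lo: "Suc k < m \<Longrightarrow> YY m k = Wht # YY m (Suc k) \<and> YY m (Suc k) = replicate (m - 2 - k) Wht"
proof -
  assume a: "Suc k < m"
  then have e: "m - 1 - k = Suc (m - 2 - k)" "k + 1 - m = 0" "Suc k + 1 - m = 0" "m - 1 - Suc k = m - 2 - k" by arith+
  show ?thesis unfolding YY_def e by simp
qed

lemma YY_hi: "m \<le> Suc k \<Longrightarrow> YY m (Suc k) = Blk # YY m k \<and> YY m k = replicate (k + 1 - m) Blk"
proof -
  assume a: "m \<le> Suc k"
  then have e: "Suc k + 1 - m = Suc (k + 1 - m)" "m - 1 - k = 0" "m - 1 - Suc k = 0" by arith+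
  show ?thesis unfolding YY_def e by simp
qed

lemma trans_word:
  assumes mn: "m \<le> n" and m1: "1 \<le> m" and k: "Suc k < n + m - 1"
  shows "XX n k @ wb_pow (LL n m k) @ YY m k = XX n (Suc k) @ bwp (LL n m (Suc k)) @ YY m (Suc k)"
proof -
  consider (i) "Suc k < m" | (ii) "Suc k = m" "Suc k < n" | (iii) "Suc k = m" "Suc k = n"
    | (iv) "m \<le> k" "Suc k < n" | (v) "m \<le> k" "Suc k = n" | (vi) "n \<le> k" using mn by linarith
  then show ?thesis
  proof cases
    case i
    have l: "LL n m k = Suc k" "LL n m (Suc k) = Suc (Suc k)" using i by (auto simp: LL_def)
    have "Suc k < n" using i mn by simp
    then have x: "XX n k = XX n (Suc k) @ [Blk]" using conjunct1[OF XX_lo] by blast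
    have y: "YY m k = Wht # YY m (Suc k)" using conjunct1[OF YY_lo[OF i]] .
    show ?thesis unfolding l x y using B_wb_W[of "Suc k"] by simp
  next
    case ii
    have l: "LL n m k = m" "LL n m (Suc k) = m" using ii by (auto simp: LL_def)
    have x: "XX n k = XX n (Suc k) @ [Blk]" using conjunct1[OF XX_lo[OF ii(2)]] .
    have y: "YY m (Suc k) = Blk # YY m k" "YY m k = []" using ii by (auto simp: YY_def)
    show ?thesis unfolding l x y using B_wb[of m] by simp
  next
    case iii
    define b where "b = m - 1"
    have b: "m = Suc b" using iii unfolding b_def by arith
    have l: "LL n m k = Suc b" "LL n m (Suc k) = b" using iii b by (auto simp: LL_def)
    have x: "XX n k = []" "XX n (Suc k) = [Wht]" using XX_at[OF iii(2)] by auto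
    have y: "YY m (Suc k) = Blk # YY m k" "YY m k = []" using iii by (auto simp: YY_def)
    show ?thesis unfolding l x y using W_bwp_B[of b] by simp
  next
    case iv
    have l: "LL n m k = m" "LL n m (Suc k) = m" using iv by (auto simp: LL_def)
    have x: "XX n k = XX n (Suc k) @ [Blk]" using conjunct1[OF XX_lo[OF iv(2)]] .
    have "m \<le> Suc k" using iv by simp
    then have y: "YY m (Suc k) = Blk # YY m k" using conjunct1[OF YY_hi] by blast
    show ?thesis unfolding l x y using B_wb[of m] by simp
  next
    case v
    define b where "b = m - 1"
    have b: "m = Suc b" using m1 unfolding b_def by arith
    have l: "LL n m k = Suc b" "LL n m (Suc k) = b" using v b by (auto simp: LL_def)
    have x: "XX n k = []" "XX n (Suc k) = [Wht]" using XX_at[OF v(2)] by auto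
    have "m \<le> Suc k" using v by simp
    then have y: "YY m (Suc k) = Blk # YY m k" using conjunct1[OF YY_hi] by blast
    show ?thesis unfolding l x y using W_bwp_B[of b] by simp
  next
    case vi
    define b where "b = n + m - 2 - k"
    have b: "n + m - 1 - k = Suc b" "n + m - 1 - Suc k = b" using k unfolding b_def by arith+
    have l: "LL n m k = Suc b" "LL n m (Suc k) = b" using vi b mn unfolding LL_def by auto
    have x: "XX n (Suc k) = XX n k @ [Wht]" using conjunct1[OF XX_hi[OF vi]] .
    have "m \<le> Suc k" using vi mn by simp
    then have y: "YY m (Suc k) = Blk # YY m k" using conjunct1[OF YY_hi] by blast
    show ?thesis unfolding l x y using W_bwp_B[of b] by simp
  qed
qed


lemma sum_split_add: "(\<Sum>k<(a::nat) + b. f k) = (\<Sum>k<a. f k) + (\<Sum>k<b. f (a + k))"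
  by (induction b) (auto simp: add.assoc)

lemma sum_tri1: "2 * (\<Sum>k<a. k + 1) = a * (a + 1::nat)"
  by (induction a) auto
lemma sum_tri2: "2 * (\<Sum>k<a. a - k) = a * (a + 1::nat)"
proof (induction a)
  case (Suc a)
  have "(\<Sum>k<Suc a. Suc a - k) = (\<Sum>k<a. Suc a - k) + 1" by simp
  also have "(\<Sum>k<a. Suc a - k) = (\<Sum>k<a. (a - k) + 1)" by (rule sum.cong) auto
  also have "\<dots> = (\<Sum>k<a. a - k) + (\<Sum>k<a. 1)" by (rule sum.distrib)
  also have "(\<Sum>k<a. (1::nat)) = a" by simp
  finally show ?case using Suc by simp
qed simp

lemma sum_LL: assumes mn: "m \<le> n" and m1: "1 \<le> m"
  shows "(\<Sum>k<n + m - 1. LL n m k) = n * m"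
proof -
  obtain m' where m': "m = Suc m'" using m1 by (cases m) auto
  have N: "n + m - 1 = m + (n - m) + m'" using mn m' by simp
  have s1: "(\<Sum>k<m. LL n m k) = (\<Sum>k<m. k + 1)" by (rule sum.cong) (auto simp: LL_def)
  have s2: "(\<Sum>k<n - m. LL n m (m + k)) = (\<Sum>k<n - m. m)" by (rule sum.cong) (auto simp: LL_def)
  have s3: "(\<Sum>k<m'. LL n m (m + (n - m) + k)) = (\<Sum>k<m'. m' - k)"
    by (rule sum.cong) (use mn m' in \<open>auto simp: LL_def\<close>)
  define S1 where "S1 = (\<Sum>k<m. k + 1)"
  define S3 where "S3 = (\<Sum>k<m'. m' - k)"
  have tot: "(\<Sum>k<n + m - 1. LL n m k) = S1 + (n - m) * m + S3"
    unfolding N sum_split_add s1 s2 s3 S1_def S3_def by (simp add: mult.commute)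
  have "2 * (S1 + S3) = 2 * (m * m)"
    using sum_tri1[of m] sum_tri2[of m'] m' unfolding S1_def S3_def by (simp add: algebra_simps)
  then have e: "S1 + S3 = m * m" by simp
  have "(n - m) * m + m * m = n * m" using mn by (metis add.commute le_add_diff_inverse2 distrib_right)
  then show ?thesis using tot e by simp
qed


lemma is_path_single: "is_path [x]" by (simp add: is_path_def)

lemma is_path_append:
  assumes "is_path xs" "is_path ys" "legal_move (last xs) (hd ys)"
  shows "is_path (xs @ ys)"
proof -
  have ne: "xs \<noteq> []" "ys \<noteq> []" using assms by (auto simp: is_path_def)
  show ?thesis unfolding is_path_def
  proof (intro conjI allI impI)
    show "xs @ ys \<noteq> []" using ne by simp
    fix k assume k: "Suc k < length (xs @ ys)"
    consider (a) "Suc k < length xs" | (b) "Suc k = length xs" | (c) "length xs \<le> k" by linarith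
    then show "legal_move ((xs @ ys) ! k) ((xs @ ys) ! Suc k)"
    proof cases
      case a then show ?thesis using assms(1) by (simp add: is_path_def nth_append)
    next
      case b
      have kk: "k = length xs - 1" using b by simp
      have "(xs @ ys) ! k = last xs" using b ne kk by (simp add: nth_append last_conv_nth)
      moreover have "(xs @ ys) ! Suc k = hd ys" using b ne by (simp add: nth_append hd_conv_nth)
      ultimately show ?thesis using assms(3) by simp
    next
      case c
      have "Suc (k - length xs) < length ys" using k c by simp
      then have "legal_move (ys ! (k - length xs)) (ys ! Suc (k - length xs))" using assms(2) by (simp add: is_path_def)
      moreover have "Suc k - length xs = Suc (k - length xs)" using c by simp
      ultimately show ?thesis using c by (simp add: nth_append)
    qed
  qed
qed

lemma is_path_map:
  assumes "\<And>t. t < L \<Longrightarrow> legal_move (f t) (f (Suc t))"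
  shows "is_path (map f [0..<Suc L])"
  unfolding is_path_def
proof (intro conjI allI impI)
  show "map f [0..<Suc L] \<noteq> []" by simp
  fix k assume k: "Suc k < length (map f [0..<Suc L])"
  then have "k < L" by simp
  moreover have "map f [0..<Suc L] ! k = f k" "map f [0..<Suc L] ! Suc k = f (Suc k)"
    using k by (simp_all del: upt_Suc)
  ultimately show "legal_move (map f [0..<Suc L] ! k) (map f [0..<Suc L] ! Suc k)" using assms by simp
qed

lemma len_XX: "length (XX n k) = (n - 1 - k) + (k + 1 - n)" by (simp add: XX_def)
lemma len_YY: "length (YY m k) = (m - 1 - k) + (k + 1 - m)" by (simp add: YY_def)

lemma len_core: "m \<le> n \<Longrightarrow> k < n + m - 1 \<Longrightarrow> length (XX n k) + 2 * LL n m k + length (YY m k) = n + m"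
  by (auto simp: len_XX len_YY LL_def)

lemma len_sw: "m \<le> n \<Longrightarrow> k < n + m - 1 \<Longrightarrow> t \<le> LL n m k \<Longrightarrow> length (sw n m k t) = n + m"
  using len_core[of m n k] by (auto simp: sw_def)

lemma sg_le: "m \<le> n \<Longrightarrow> k < n + m - 1 \<Longrightarrow> t \<le> LL n m k \<Longrightarrow> sg n m k t \<le> n + m"
  using len_core[of m n k] by (auto simp: sg_def)

lemma stg_facts:
  shows "stg n m k \<noteq> []" "hd (stg n m k) = cfg (sw n m k 0) (sg n m k 0)"
    "last (stg n m k) = cfg (sw n m k (LL n m k)) (sg n m k (LL n m k))"
    "is_path (stg n m k)" "length (stg n m k) = Suc (LL n m k)"
proof -
  show "stg n m k \<noteq> []" by (simp add: stg_def)
  show "hd (stg n m k) = cfg (sw n m k 0) (sg n m k 0)" by (simp add: stg_def hd_map del: upt_Suc)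
  show "last (stg n m k) = cfg (sw n m k (LL n m k)) (sg n m k (LL n m k))" by (simp add: stg_def last_map)
  show "is_path (stg n m k)" unfolding stg_def by (rule is_path_map) (rule stage_step)
  show "length (stg n m k) = Suc (LL n m k)" by (simp add: stg_def)
qed

lemma gap_trans: "m \<le> n \<Longrightarrow> 1 \<le> m \<Longrightarrow> Suc k < n + m - 1 \<Longrightarrow>
   sg n m (Suc k) 0 = Suc (sg n m k (LL n m k)) \<or> Suc (sg n m (Suc k) 0) = sg n m k (LL n m k)"
  by (auto simp: sg_def len_XX LL_def)


lemma trans_legal:
  assumes mn: "m \<le> n" and m1: "1 \<le> m" and k: "Suc k < n + m - 1"
  shows "legal_move (last (stg n m k)) (hd (stg n m (Suc k)))"
proof -
  let ?W = "XX n k @ wb_pow (LL n m k) @ YY m k"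
  have w1: "sw n m k (LL n m k) = ?W" by (rule sw_last)
  have w2: "sw n m (Suc k) 0 = ?W" using sw_first trans_word[OF mn m1 k] by simp
  have nv: "Vac \<notin> set ?W" using nV_sw w1 by metis
  have lw: "length ?W = n + m" using len_sw[OF mn, of k "LL n m k"] k w1 by simp
  have g1: "sg n m k (LL n m k) \<le> n + m" using sg_le[OF mn, of k "LL n m k"] k by simp
  have g2: "sg n m (Suc k) 0 \<le> n + m" using sg_le[OF mn k, of 0] by simp
  from gap_trans[OF mn m1 k] show ?thesis
  proof
    assume e: "sg n m (Suc k) 0 = Suc (sg n m k (LL n m k))"
    have "legal_move (cfg ?W (sg n m k (LL n m k))) (cfg ?W (Suc (sg n m k (LL n m k))))"
      by (rule lm_right[OF nv]) (use g2 e lw in simp)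
    then show ?thesis using e w1 w2 by (simp add: stg_facts)
  next
    assume e: "Suc (sg n m (Suc k) 0) = sg n m k (LL n m k)"
    have "legal_move (cfg ?W (sg n m k (LL n m k))) (cfg ?W (sg n m k (LL n m k) - 1))"
      by (rule lm_left[OF nv]) (use g1 e lw in auto)
    moreover have "sg n m (Suc k) 0 = sg n m k (LL n m k) - 1" using e by simp
    ultimately show ?thesis using w1 w2 by (simp add: stg_facts)
  qed
qed

definition chn :: "nat \<Rightarrow> nat \<Rightarrow> nat \<Rightarrow> config list" where
  "chn n m k = concat (map (stg n m) [0..<k])"

lemma chain:
  assumes mn: "m \<le> n" and m1: "1 \<le> m" and k1: "1 \<le> k" and kN: "k \<le> n + m - 1"
  shows "is_path (chn n m k) \<and> chn n m k \<noteq> [] \<and> hd (chn n m k) = hd (stg n m 0)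
     \<and> last (chn n m k) = last (stg n m (k - 1))"
  using k1 kN
proof (induction k rule: dec_induct)
  case base
  then show ?case using stg_facts[of n m 0] by (simp add: chn_def)
next
  case (step k)
  have e: "chn n m (Suc k) = chn n m k @ stg n m k" by (simp add: chn_def)
  have IH: "is_path (chn n m k) \<and> chn n m k \<noteq> [] \<and> hd (chn n m k) = hd (stg n m 0)
     \<and> last (chn n m k) = last (stg n m (k - 1))" using step by simp
  have kk: "Suc (k - 1) = k" using step by simp
  have "legal_move (last (stg n m (k - 1))) (hd (stg n m (Suc (k - 1))))"
    by (rule trans_legal[OF mn m1]) (use step in simp)
  then have lm: "legal_move (last (chn n m k)) (hd (stg n m k))" using IH kk by simp
  have "is_path (chn n m (Suc k))" unfolding e by (rule is_path_append) (use IH lm stg_facts in auto)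
  then show ?case using IH stg_facts[of n m k] by (simp add: e)
qed

lemma len_chn: "length (chn n m k) = (\<Sum>j<k. Suc (LL n m j))"
  by (induction k) (auto simp: chn_def stg_facts)

definition CP :: "nat \<Rightarrow> nat \<Rightarrow> config list" where
  "CP n m = init_config n m # chn n m (n + m - 1) @ [final_config n m]"

lemma sw00: "1 \<le> n \<Longrightarrow> 1 \<le> m \<Longrightarrow> sw n m 0 0 = replicate n Blk @ replicate m Wht \<and> sg n m 0 0 = n + 1"
proof -
  assume n: "1 \<le> n" and m: "1 \<le> m"
  have L: "LL n m 0 = 1" using m by (simp add: LL_def)
  have X: "XX n 0 = replicate (n - 1) Blk" using n by (simp add: XX_def)
  have Y: "YY m 0 = replicate (m - 1) Wht" using m by (simp add: YY_def)
  obtain n' where n': "n = Suc n'" using n by (cases n) auto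
  obtain m' where m': "m = Suc m'" using m by (cases m) auto
  have a: "replicate (n - 1) Blk @ [Blk] = replicate n Blk" using n' by (simp add: replicate_append_same)
  have b: "Wht # replicate (m - 1) Wht = replicate m Wht" using m' by simp
  show ?thesis using a b n by (simp add: sw_def sg_def L X Y bwp_Suc)
qed

lemma swlast: "m \<le> n \<Longrightarrow> 2 \<le> m \<Longrightarrow> sw n m (n + m - 2) (LL n m (n + m - 2)) = replicate m Wht @ replicate n Blk
   \<and> (sg n m (n + m - 2) (LL n m (n + m - 2)) = m - 1 \<or> sg n m (n + m - 2) (LL n m (n + m - 2)) = m + 1)"
proof -
  assume mn: "m \<le> n" and m: "2 \<le> m"
  let ?k = "n + m - 2"
  have L: "LL n m ?k = 1" using mn m by (simp add: LL_def)
  have X: "XX n ?k = replicate (m - 1) Wht" using mn m by (simp add: XX_def)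
  have Y: "YY m ?k = replicate (n - 1) Blk" using mn m by (simp add: YY_def)
  obtain n' where n': "n = Suc n'" using mn m by (cases n) auto
  obtain m' where m': "m = Suc m'" using m by (cases m) auto
  have a: "replicate (m - 1) Wht @ [Wht] = replicate m Wht" using m' by (simp add: replicate_append_same)
  have b: "Blk # replicate (n - 1) Blk = replicate n Blk" using n' by simp
  have "sw n m ?k 1 = replicate m Wht @ replicate n Blk"
    using a b by (simp add: sw_def X Y L wb_Suc)
  moreover have "sg n m ?k 1 = m - 1 \<or> sg n m ?k 1 = m + 1" using m by (simp add: sg_def X L)
  ultimately show ?thesis using L by simp
qed


lemma cfg_split: "cfg (A @ B) (length A) = A @ Vac # B" by (simp add: cfg_def)

lemma CP_sol:
  assumes mn: "m \<le> n" and m2: "2 \<le> m"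
  shows "solution n m (CP n m)"
proof -
  have m1: "1 \<le> m" and n1: "1 \<le> n" using mn m2 by auto
  let ?N = "n + m - 1"
  have ch: "is_path (chn n m ?N) \<and> chn n m ?N \<noteq> [] \<and> hd (chn n m ?N) = hd (stg n m 0)
     \<and> last (chn n m ?N) = last (stg n m (?N - 1))" using chain[OF mn m1, of ?N] m1 n1 by simp
  have N1: "?N - 1 = n + m - 2" by simp
  note sl = swlast[OF mn m2]
  have nvf: "Vac \<notin> set (replicate m Wht @ replicate n Blk)" by auto
  have l1: "legal_move (last (chn n m ?N)) (final_config n m)"
  proof -
    have e: "last (chn n m ?N) = cfg (replicate m Wht @ replicate n Blk) (sg n m (n + m - 2) (LL n m (n + m - 2)))"
      using ch N1 sl stg_facts(3) by simp
    from conjunct2[OF sl] show ?thesis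
    proof
      assume "sg n m (n + m - 2) (LL n m (n + m - 2)) = m - 1"
      then show ?thesis using e final_cfg[of n m] lm_right[OF nvf, of "m - 1"] m1 by simp
    next
      assume "sg n m (n + m - 2) (LL n m (n + m - 2)) = m + 1"
      then show ?thesis using e final_cfg[of n m] lm_left[OF nvf, of "m + 1"] n1 by simp
    qed
  qed
  have p2: "is_path (chn n m ?N @ [final_config n m])"
    by (rule is_path_append) (use ch is_path_single l1 in auto)
  have nvs: "Vac \<notin> set (replicate n Blk @ replicate m Wht)" by auto
  have l0: "legal_move (init_config n m) (hd (chn n m ?N @ [final_config n m]))"
  proof -
    have "hd (chn n m ?N @ [final_config n m]) = cfg (replicate n Blk @ replicate m Wht) (Suc n)"
      using ch sw00[OF n1 m1] stg_facts(2) by simp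
    then show ?thesis using init_cfg[of n m] lm_right[OF nvs, of n] m1 by simp
  qed
  have "is_path ([init_config n m] @ chn n m ?N @ [final_config n m])"
    by (rule is_path_append) (use is_path_single p2 l0 in auto)
  then show ?thesis by (simp add: solution_def CP_def)
qed

lemma CP_len:
  assumes mn: "m \<le> n" and m1: "1 \<le> m"
  shows "length (CP n m) = n * m + n + m + 1"
proof -
  have "(\<Sum>j<n + m - 1. Suc (LL n m j)) = (\<Sum>j<n + m - 1. LL n m j + 1)" by simp
  also have "\<dots> = (\<Sum>j<n + m - 1. LL n m j) + (\<Sum>j<n + m - 1. 1)" by (rule sum.distrib)
  finally have "length (chn n m (n + m - 1)) = (\<Sum>j<n + m - 1. LL n m j) + (n + m - 1)"
    by (simp add: len_chn)
  then show ?thesis using sum_LL[OF mn m1] m1 by (simp add: CP_def)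
qed

lemma CP_1:
  assumes mn: "m \<le> n" and m1: "1 \<le> m"
  shows "CP n m ! 1 = first_move_config n m"
proof -
  have n1: "1 \<le> n" using mn m1 by simp
  have ch: "chn n m (n + m - 1) \<noteq> [] \<and> hd (chn n m (n + m - 1)) = hd (stg n m 0)"
    using chain[OF mn m1, of "n + m - 1"] m1 n1 by simp
  have "CP n m ! 1 = (chn n m (n + m - 1) @ [final_config n m]) ! 0" by (simp add: CP_def)
  also have "\<dots> = hd (chn n m (n + m - 1))" using conjunct1[OF ch] by (simp add: nth_append hd_conv_nth)
  also have "\<dots> = cfg (replicate n Blk @ replicate m Wht) (Suc n)" using ch sw00[OF n1 m1] stg_facts(2) by simp
  also have "\<dots> = first_move_config n m"
  proof -
    obtain m' where m': "m = Suc m'" using m1 by (cases m) auto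
    show ?thesis using m' by (simp add: cfg_def first_move_config_def)
  qed
  finally show ?thesis .
qed

lemma nu_last:
  assumes mn: "m \<le> n" and t1: "1 \<le> t" and tm: "t < m"
  shows "nu n m t = last (stg n m (t + n - 1))"
proof -
  define k where "k = t + n - 1"
  have L: "LL n m k = m - t" using mn t1 tm by (simp add: LL_def k_def)
  have X: "XX n k = replicate t Wht" using t1 by (simp add: XX_def k_def)
  have Y: "YY m k = replicate (n - m + t) Blk" using mn t1 tm by (simp add: YY_def k_def)
  have last: "last (stg n m k) = cfg (replicate t Wht @ wb_pow (m - t) @ replicate (n - m + t) Blk) (sg n m k (m - t))"
    using stg_facts(3)[of n m k] sw_last[of n m k] L X Y by simp
  have par: "even k \<longleftrightarrow> odd (n + t)" using t1 unfolding k_def by (cases t) auto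
  show ?thesis
  proof (cases "even (n + t)")
    case True
    then have ok: "odd k" using par by simp
    have "sg n m k (m - t) = length (XX n k) + 2 * (m - t)" using ok by (simp add: sg_def)
    then have "sg n m k (m - t) = length (replicate t Wht @ wb_pow (m - t))" using X by simp
    then show ?thesis using True last cfg_split[of "replicate t Wht @ wb_pow (m - t)"] by (simp add: nu_def k_def)
  next
    case False
    then have ek: "even k" using par by simp
    have "sg n m k (m - t) = length (XX n k) + 2 * (LL n m k - (m - t))" using ek by (simp add: sg_def)
    then have "sg n m k (m - t) = length (replicate t Wht)" using X L by simp
    then show ?thesis using False last cfg_split[of "replicate t Wht"] by (simp add: nu_def k_def)
  qed
qed

lemma nu_m: "m \<le> n \<Longrightarrow> nu n m m = final_config n m"
  by (simp add: nu_def final_config_def)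


lemma CP_split:
  assumes mn: "m \<le> n" and m2: "2 \<le> m" and i1: "1 \<le> i" and im: "i < m"
  shows "\<exists>P1 P2. CP n m = P1 @ P2 \<and> nu n m i \<in> set P1 \<and> nu n m (i + 1) \<in> set P2"
proof -
  let ?N = "n + m - 1"
  have le: "i + n \<le> ?N" using im by simp
  have ee: "i + n + (?N - (i + n)) = ?N" using le by simp
  have up: "[0..<?N] = [0..<i + n] @ [i + n..<?N]" using upt_add_eq_append[of 0 "i + n" "?N - (i + n)", unfolded ee] by simp
  define P1 where "P1 = init_config n m # chn n m (i + n)"
  define P2 where "P2 = concat (map (stg n m) [i + n..<?N]) @ [final_config n m]"
  have e: "CP n m = P1 @ P2" unfolding CP_def P1_def P2_def chn_def up by simp
  have a: "nu n m i \<in> set P1"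
  proof -
    have "nu n m i = last (stg n m (i + n - 1))" using nu_last[OF mn i1 im] .
    moreover have "last (stg n m (i + n - 1)) \<in> set (stg n m (i + n - 1))" using stg_facts(1) by simp
    moreover have "i + n - 1 \<in> set [0..<i + n]" using i1 by simp
    ultimately show ?thesis unfolding P1_def chn_def by auto
  qed
  have b: "nu n m (i + 1) \<in> set P2"
  proof (cases "i + 1 < m")
    case True
    have "nu n m (i + 1) = last (stg n m (i + 1 + n - 1))" using nu_last[OF mn _ True] by simp
    moreover have "last (stg n m (i + n)) \<in> set (stg n m (i + n))" using stg_facts(1) by simp
    moreover have "i + n \<in> set [i + n..<?N]" using True by simp
    ultimately show ?thesis unfolding P2_def by auto
  next
    case False
    then have "i + 1 = m" using im by simp
    then show ?thesis using nu_m[OF mn] by (simp add: P2_def)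
  qed
  show ?thesis using e a b by blast
qed

theorem lemma10:
  fixes n m :: nat
  assumes "2 \<le> m" and "m \<le> n"
  shows "(\<forall>p. optimal_solution n m p \<and> p ! 1 = first_move_config n m \<longrightarrow>
            (\<forall>t. 1 \<le> t \<and> t \<le> m \<longrightarrow> (\<exists>k < length p. p ! k = nu n m t)))
       \<and> (\<forall>p q i a b c d.
            optimal_solution n m p \<and> p ! 1 = first_move_config n m \<and>
            optimal_solution n m q \<and> q ! 1 = first_move_config n m \<and>
            1 \<le> i \<and> i < m \<and>
            a < length p \<and> b < length p \<and> p ! a = nu n m i \<and> p ! b = nu n m (i + 1) \<and>
            c < length q \<and> d < length q \<and> q ! c = nu n m i \<and> q ! d = nu n m (i + 1)
            \<longrightarrow> a < b \<and> c < d \<and> drop a (take (Suc b) p) = drop c (take (Suc d) q))"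
proof -
  have m2: "2 \<le> m" and mn: "m \<le> n" using assms by auto
  have m1: "1 \<le> m" and n1: "1 \<le> n" and n2: "2 \<le> n" using m2 mn by auto
  define T where "T = n * m + n + m"
  have sol: "solution n m (CP n m)" by (rule CP_sol[OF mn m2])
  have len: "length (CP n m) = T + 1" using CP_len[OF mn m1] by (simp add: T_def)
  have c1: "CP n m ! 1 = first_move_config n m" by (rule CP_1[OF mn m1])
  have tCP: "\<And>k. k < T + 1 \<Longrightarrow> Psi n m (CP n m ! k) = int k"
    using tight[OF sol n1 m1] len by (simp add: T_def)
  have uniq: "\<And>p. optimal_solution n m p \<Longrightarrow> p ! 1 = first_move_config n m \<Longrightarrow> p = CP n m"
  proof -
    fix p assume op: "optimal_solution n m p" and p1: "p ! 1 = first_move_config n m"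
    have sp: "solution n m p" using op by (simp add: optimal_solution_def)
    have "length p \<le> length (CP n m)" using op sol by (simp add: optimal_solution_def)
    moreover have "T + 1 \<le> length p" using sol_len[OF sp n1 m1] by (simp add: T_def)
    ultimately have lp: "length p = T + 1" using len by simp
    have tp: "\<And>k. k < T + 1 \<Longrightarrow> Psi n m (p ! k) = int k \<and> Phi n m (p ! k) = int (T - k)"
      using tight[OF sp n1 m1] lp by (simp add: T_def)
    have tc: "\<And>k. k < T + 1 \<Longrightarrow> Psi n m (CP n m ! k) = int k \<and> Phi n m (CP n m ! k) = int (T - k)"
      using tight[OF sol n1 m1] len by (simp add: T_def)
    have pp: "is_path p" "hd p = init_config n m" using sp by (auto simp: solution_def)
    have pc: "is_path (CP n m)" "hd (CP n m) = init_config n m" using sol by (auto simp: solution_def)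
    have eq: "\<And>k. k < T + 1 \<Longrightarrow> p ! k = CP n m ! k"
    proof -
      fix k show "k < T + 1 \<Longrightarrow> p ! k = CP n m ! k"
      proof (induction k)
        case 0
        then show ?case using sol_facts(2)[OF sp] sol_facts(2)[OF sol] by simp
      next
        case (Suc k)
        show ?case
        proof (cases "k = 0")
          case True
          then show ?thesis using p1 c1 by simp
        next
          case False
          have IH: "p ! k = CP n m ! k" using Suc by simp
          have kT: "k < T" using Suc by simp
          obtain ws g where x: "p ! k = cfg ws g" and w: "wv n m ws" and g: "g \<le> n + m"
            using path_vc[OF pp, of k] Suc lp by (auto simp: vc_def)
          have P: "PsW n m ws g = int k" "PhW n m ws g = int (T - k)"
            using tp[of k] kT x Psi_cfg[OF w g] Phi_cfg[OF w g] by auto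
          have "legal_move (p ! k) (p ! Suc k)" using pp(1) kT lp by (simp add: is_path_def)
          then have l1: "legal_move (cfg ws g) (p ! Suc k)" using x by simp
          have "legal_move (CP n m ! k) (CP n m ! Suc k)" using pc(1) kT len by (simp add: is_path_def)
          then have l2: "legal_move (cfg ws g) (CP n m ! Suc k)" using x IH by simp
          have t1: "Psi n m (p ! Suc k) = PsW n m ws g + 1" "Phi n m (p ! Suc k) = PhW n m ws g - 1"
            using tp[of "Suc k"] Suc P kT by auto
          have t2: "Psi n m (CP n m ! Suc k) = PsW n m ws g + 1" "Phi n m (CP n m ! Suc k) = PhW n m ws g - 1"
            using tc[of "Suc k"] Suc P kT by auto
          have bal: "PsW n m ws g + PhW n m ws g = int (n * m + n + m)" using P kT by (simp add: T_def)
          show ?thesis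
            by (rule L4[OF n2 m2 w g bal _ _ l1 t1 l2 t2]) (use P False kT in auto)
        qed
      qed
    qed
    show "p = CP n m" by (rule nth_equalityI) (use lp len eq in auto)
  qed
  have distinct: "\<And>a a'. a < T + 1 \<Longrightarrow> a' < T + 1 \<Longrightarrow> CP n m ! a = CP n m ! a' \<Longrightarrow> a = a'"
    using tCP by (metis of_nat_eq_iff)
  show ?thesis
  proof (rule conjI; intro allI impI)
    fix p t assume h: "optimal_solution n m p \<and> p ! 1 = first_move_config n m" "1 \<le> t \<and> t \<le> m"
    have e: "p = CP n m" using uniq h(1) by blast
    have "nu n m t \<in> set (CP n m)"
    proof (cases "t = m")
      case True
      then show ?thesis using nu_m[OF mn] by (simp add: CP_def)
    next
      case False
      then have tm: "t < m" using h(2) by simp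
      obtain P1 P2 where "CP n m = P1 @ P2" "nu n m t \<in> set P1" using CP_split[OF mn m2 _ tm] h(2) by blast
      then show ?thesis by simp
    qed
    then show "\<exists>k<length p. p ! k = nu n m t" using e by (simp add: in_set_conv_nth)
  next
    fix p q i a b c d
    assume h: "optimal_solution n m p \<and> p ! 1 = first_move_config n m \<and>
            optimal_solution n m q \<and> q ! 1 = first_move_config n m \<and>
            1 \<le> i \<and> i < m \<and>
            a < length p \<and> b < length p \<and> p ! a = nu n m i \<and> p ! b = nu n m (i + 1) \<and>
            c < length q \<and> d < length q \<and> q ! c = nu n m i \<and> q ! d = nu n m (i + 1)"
    have ep: "p = CP n m" and eq: "q = CP n m" using uniq h by blast+
    obtain P1 P2 where sp: "CP n m = P1 @ P2" "nu n m i \<in> set P1" "nu n m (i + 1) \<in> set P2"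
      using CP_split[OF mn m2] h by blast
    obtain a' where a': "a' < length P1" "P1 ! a' = nu n m i" using sp(2) by (auto simp: in_set_conv_nth)
    obtain b' where b': "b' < length P2" "P2 ! b' = nu n m (i + 1)" using sp(3) by (auto simp: in_set_conv_nth)
    have A: "CP n m ! a' = nu n m i" using a' sp(1) by (simp add: nth_append)
    have B: "CP n m ! (length P1 + b') = nu n m (i + 1)" using b' sp(1) by (simp add: nth_append)
    have LA: "a' < T + 1" "length P1 + b' < T + 1" using a' b' sp(1) len by auto
    have "a = a'" using distinct[of a a'] h ep len A LA by auto
    moreover have "b = length P1 + b'" using distinct[of b "length P1 + b'"] h ep len B LA by auto
    moreover have "c = a'" using distinct[of c a'] h eq len A LA by auto
    moreover have "d = length P1 + b'" using distinct[of d "length P1 + b'"] h eq len B LA by auto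
    ultimately show "a < b \<and> c < d \<and> drop a (take (Suc b) p) = drop c (take (Suc d) q)"
      using a' ep eq by simp
  qed
qed


end
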